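(* Let $I=(i_1,\dots,i_k)$ and $J=(j_1,\dots,j_l)$ be compositions of $n$. Then the coefficient $C_I^J(q)$ of $\Psi_I$ in $S^J(q)$ is given by the following rule: (i) if $i_1<j_1$, then $C_I^J(q)=C_{(i_1+i_2,i_3,\dots,i_k)}^J(q)$; (ii) otherwise, \[ C_I^J(q) = \left[\begin{matrix} k+j_1-1\\ j_1\end{matrix}\right]_q C_{I'}^{(j_2,\dots,j_l)}(q), \] where the (ribbon) diagram of $I'$ is obtained by removing the first $j_1$ cells of the diagram of $I$.
   Context: $\mathbf{Sym}$ is the algebra of noncommutative symmetric functions, with complete functions $S_n$ and Tevlin's noncommutative monomial basis $\Psi_I$. $\mathbf{WQSym}$ has basis $\mathbf{M}_u$ indexed by packed words $u$. For a packed word $u$, a special inversion is a pair $i<j$ with $u_i>u_j$ such that $u_j$ is the rightmost occurrence of its letter in $u$; $\mathrm{sinv}(u)$ is their number. The $q$-product $\star_q$ on $\mathbf{WQSym}$ is defined by requiring that the elements $\mathbf{M}'_u=q^{\mathrm{sinv}(u)}\mathbf{M}_u$ multiply (under $\star_q$) exactly as the $\mathbf{M}_u$ multiply under the usual product. The W-composition $\mathrm{WC}(u)$ of a packed word $u$ is the composition whose descent set is the set of positions of the last occurrences of each letter in $u$; the map $\zeta:\mathbf{M}_u\mapsto\Psi_{\mathrm{WC}(u)}$ is an algebra morphism from $\mathbf{WQSym}$ onto $\mathbf{Sym}$. Let $\alpha(S_n)=\sum_u \mathbf{M}_u$ over nondecreasing packed words $u$ of length $n$. For a composition $J=(j_1,\dots,j_r)$,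 $S^J(q)=\zeta(\alpha(S_{j_1})\star_q\cdots\star_q\alpha(S_{j_r}))$, and $C_I^J(q)$ denotes the coefficient of $\Psi_I$ in $S^J(q)$. $\left[\begin{matrix} a\\ b\end{matrix}\right]_q$ denotes the Gaussian $q$-binomial coefficient. *)

theory Defs
  imports Main
begin

definition packed :: "nat list \<Rightarrow> bool" where
  "packed u \<longleftrightarrow> (\<exists>m. set u = {1..m})"

definition pack :: "nat list \<Rightarrow> nat list" where
  "pack w = map (\<lambda>x. card {y \<in> set w. y \<le> x}) w"

definition sinv :: "nat list \<Rightarrow> nat" where
  "sinv u = card {(i, j). i < j \<and> j < length u \<and> u ! i > u ! j
                          \<and> u ! j \<notin> set (drop (Suc j) u)}"

definition compositions :: "nat \<Rightarrow> nat list set" where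
  "compositions n = {I. (\<forall>x\<in>set I. 0 < x) \<and> sum_list I = n}"

text \<open>The composition of n = max D whose descent set (together with n) is D,
for a finite set D of positive integers.\<close>
definition comp_of_set :: "nat set \<Rightarrow> nat list" where
  "comp_of_set D = (let ds = sorted_list_of_set D
                    in map (\<lambda>(a, b). a - b) (zip ds (0 # ds)))"

definition last_occ :: "nat list \<Rightarrow> nat set" where
  "last_occ u = {i \<in> {1..length u}. u ! (i - 1) \<notin> set (drop i u)}"

definition WC :: "nat list \<Rightarrow> nat list" where
  "WC u = comp_of_set (last_occ u)"

text \<open>Remove the first m cells of the ribbon diagram of a composition
(cells read row by row).\<close>
fun remove_cells :: "nat \<Rightarrow> nat list \<Rightarrow> nat list" where
  "remove_cells 0 I = I"
| "remove_cells (Suc m) [] = []"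
| "remove_cells (Suc m) (i # I) =
     (if Suc m < i then (i - Suc m) # I else remove_cells (Suc m - i) I)"

text \<open>An element of WQSym (with coefficients in a field) is represented by its
coefficient function on words, u \<mapsto> coefficient of M_u (supported on packed words).\<close>
type_synonym 'a wqsym = "nat list \<Rightarrow> 'a"

text \<open>Usual product: M_u M_v = sum of M_w over packed w with pack(w[1..|u|]) = u and
pack(w[|u|+1..]) = v. The q-product is defined by M'_u \<star>_q M'_v = sum M'_w with
M'_u = q^sinv(u) M_u, i.e.
M_u \<star>_q M_v = sum_w q^(sinv w - sinv u - sinv v) M_w.
Below is the coefficient of M_w in the bilinear extension f \<star>_q g.\<close>
definition qprod :: "'a::field \<Rightarrow> 'a wqsym \<Rightarrow> 'a wqsym \<Rightarrow> 'a wqsym" where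
  "qprod q f g = (\<lambda>w. if packed w then
      (\<Sum>k\<le>length w. f (pack (take k w)) * g (pack (drop k w)) *
          q powi (int (sinv w) - int (sinv (pack (take k w))) - int (sinv (pack (drop k w)))))
     else 0)"

definition wq_one :: "'a::field wqsym" where
  "wq_one = (\<lambda>w. if w = [] then 1 else 0)"

definition alphaS :: "nat \<Rightarrow> 'a::field wqsym" where
  "alphaS n = (\<lambda>u. if packed u \<and> length u = n \<and> sorted u then 1 else 0)"

text \<open>alpha(S_{j1}) \<star>_q ... \<star>_q alpha(S_{jr}) (the q-product is associative).\<close>
fun Sprod :: "'a::field \<Rightarrow> nat list \<Rightarrow> 'a wqsym" where
  "Sprod q [] = wq_one"
| "Sprod q (j # J) = qprod q (alphaS j) (Sprod q J)"

text \<open>Elements of Sym are represented by their coefficient function in the basis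
Psi_I. zeta(M_u) = Psi_(WC u), extended linearly.\<close>
definition zeta :: "'a::field wqsym \<Rightarrow> (nat list \<Rightarrow> 'a)" where
  "zeta f = (\<lambda>I. \<Sum>u\<in>{u. packed u \<and> length u = sum_list I \<and> WC u = I}. f u)"

definition SJ :: "'a::field \<Rightarrow> nat list \<Rightarrow> (nat list \<Rightarrow> 'a)" where
  "SJ q J = zeta (Sprod q J)"

definition CIJ :: "'a::field \<Rightarrow> nat list \<Rightarrow> nat list \<Rightarrow> 'a" where
  "CIJ q I J = SJ q J I"

fun qbinom :: "'a::field \<Rightarrow> nat \<Rightarrow> nat \<Rightarrow> 'a" where
  "qbinom q n 0 = 1"
| "qbinom q 0 (Suc k) = 0"
| "qbinom q (Suc n) (Suc k) = qbinom q n k + q ^ Suc k * qbinom q n (Suc k)"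

end

theory Submission
  imports Defs
begin

definition samep :: "nat list \<Rightarrow> nat list \<Rightarrow> bool" where
  "samep u w \<longleftrightarrow> length u = length w \<and>
     (\<forall>a<length u. \<forall>b<length u. u!a < u!b \<longleftrightarrow> w!a < w!b)"

lemma samep_eq:
  assumes "samep u w" "a < length u" "b < length u"
  shows "u!a = u!b \<longleftrightarrow> w!a = w!b"
proof -
  have 1: "u!a < u!b \<longleftrightarrow> w!a < w!b" "u!b < u!a \<longleftrightarrow> w!b < w!a"
    using assms unfolding samep_def by blast+
  show ?thesis using 1 by (metis linorder_neq_iff)
qed

lemma samep_le:
  assumes "samep u w" "a < length u" "b < length u"
  shows "u!a \<le> u!b \<longleftrightarrow> w!a \<le> w!b"
proof -
  have 1: "u!b < u!a \<longleftrightarrow> w!b < w!a"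
    using assms unfolding samep_def by blast
  show ?thesis using 1 by (meson not_le)
qed

lemma samep_sym: "samep u w \<Longrightarrow> samep w u"
  unfolding samep_def by auto

lemma samep_trans: "samep u w \<Longrightarrow> samep w x \<Longrightarrow> samep u x"
  unfolding samep_def by auto

lemma samep_refl: "samep u u"
  unfolding samep_def by auto

lemma samep_drop: "samep u w \<Longrightarrow> samep (drop j u) (drop j w)"
  unfolding samep_def by auto

lemma samep_take: "samep u w \<Longrightarrow> samep (take j u) (take j w)"
  unfolding samep_def by auto

lemma card_image_samep:
  assumes "samep u w" "P \<subseteq> {..<length u}"
  shows "card (nth u ` P) = card (nth w ` P)"
proof -
  define h where "h = (\<lambda>y. w ! (SOME b. b \<in> P \<and> u!b = y))"
  have "bij_betw h (nth u ` P) (nth w ` P)"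
  proof (rule bij_betwI')
    fix x y assume "x \<in> nth u ` P" "y \<in> nth u ` P"
    then obtain a b where ab: "a \<in> P" "x = u!a" "b \<in> P" "y = u!b" by auto
    let ?a = "SOME c. c \<in> P \<and> u!c = x"
    let ?b = "SOME c. c \<in> P \<and> u!c = y"
    have 1: "?a \<in> P \<and> u!?a = x" by (rule someI[of _ a]) (use ab in auto)
    have 2: "?b \<in> P \<and> u!?b = y" by (rule someI[of _ b]) (use ab in auto)
    show "(h x = h y) = (x = y)"
      unfolding h_def using 1 2 samep_eq[OF assms(1), of ?a ?b] assms(2) by auto
  next
    fix x assume "x \<in> nth u ` P"
    then obtain a where a: "a \<in> P" "x = u!a" by auto
    let ?a = "SOME c. c \<in> P \<and> u!c = x"
    have 1: "?a \<in> P \<and> u!?a = x" by (rule someI[of _ a]) (use a in auto)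
    then show "h x \<in> nth w ` P" unfolding h_def by auto
  next
    fix y assume "y \<in> nth w ` P"
    then obtain a where a: "a \<in> P" "y = w!a" by auto
    let ?a = "SOME c. c \<in> P \<and> u!c = u!a"
    have 1: "?a \<in> P \<and> u!?a = u!a" by (rule someI[of _ a]) (use a in auto)
    have "h (u!a) = y" unfolding h_def using 1 a samep_eq[OF assms(1), of ?a a] assms(2) by auto
    moreover have "u!a \<in> nth u ` P" using a by auto
    ultimately show "\<exists>x\<in>nth u ` P. y = h x" by metis
  qed
  then show ?thesis by (rule bij_betw_same_card)
qed

lemma set_filter_nth: "{y \<in> set u. Q y} = nth u ` {b. b < length u \<and> Q (u!b)}"
  by (auto simp: in_set_conv_nth)

lemma pack_samep_eq:
  assumes "samep u w" shows "pack u = pack w"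
proof -
  have len: "length u = length w" using assms samep_def by auto
  show ?thesis
  proof (rule nth_equalityI)
    show "length (pack u) = length (pack w)" by (simp add: pack_def len)
    fix a assume "a < length (pack u)"
    then have a: "a < length u" by (simp add: pack_def)
    have "{y \<in> set u. y \<le> u!a} = nth u ` {b. b < length u \<and> u!b \<le> u!a}"
      by (rule set_filter_nth)
    moreover have "{y \<in> set w. y \<le> w!a} = nth w ` {b. b < length u \<and> w!b \<le> w!a}"
      using set_filter_nth[of w] len by simp
    moreover have "{b. b < length u \<and> u!b \<le> u!a} = {b. b < length u \<and> w!b \<le> w!a}"
      using samep_le[OF assms _ a] by auto
    ultimately show "pack u ! a = pack w ! a"
      using a len card_image_samep[OF assms, of "{b. b < length u \<and> w!b \<le> w!a}"]
      by (auto simp: pack_def)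
  qed
qed

lemma card_le_strict:
  fixes V :: "nat set"
  assumes "finite V" "x \<in> V" "y \<in> V" "x < y"
  shows "card {z \<in> V. z \<le> x} < card {z \<in> V. z \<le> y}"
proof (rule psubset_card_mono)
  show "{z \<in> V. z \<le> x} \<subset> {z \<in> V. z \<le> y}"
  proof -
    have sub: "{z \<in> V. z \<le> x} \<subseteq> {z \<in> V. z \<le> y}" using assms by auto
    have "y \<notin> {z \<in> V. z \<le> x}" "y \<in> {z \<in> V. z \<le> y}" using assms by auto
    then show ?thesis using sub by blast
  qed
qed (use assms in auto)

lemma samep_pack: "samep w (pack w)"
  unfolding samep_def pack_def
proof (intro conjI allI impI)
  fix a b assume a: "a < length w" and b: "b < length w"
  have fin: "finite (set w)" by simp
  show "(w!a < w!b) = (map (\<lambda>x. card {y \<in> set w. y \<le> x}) w ! a < map (\<lambda>x. card {y \<in> set w. y \<le> x}) w ! b)"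
  proof
    assume "w!a < w!b" then show "map (\<lambda>x. card {y \<in> set w. y \<le> x}) w ! a < map (\<lambda>x. card {y \<in> set w. y \<le> x}) w ! b"
      using a b card_le_strict[OF fin, of "w!a" "w!b"] nth_mem by simp
  next
    assume h: "map (\<lambda>x. card {y \<in> set w. y \<le> x}) w ! a < map (\<lambda>x. card {y \<in> set w. y \<le> x}) w ! b"
    show "w!a < w!b"
    proof (rule ccontr)
      assume "\<not> w!a < w!b"
      then have "{y \<in> set w. y \<le> w!b} \<subseteq> {y \<in> set w. y \<le> w!a}" by auto
      then have "card {y \<in> set w. y \<le> w!b} \<le> card {y \<in> set w. y \<le> w!a}" by (simp add: card_mono)
      then show False using h a b by simp
    qed
  qed
qed (simp add: pack_def)

lemma length_pack[simp]: "length (pack w) = length w"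
  by (simp add: pack_def)

lemma packed_pack: "packed (pack w)"
proof -
  define f where "f = (\<lambda>x. card {y \<in> set w. y \<le> x})"
  define d where "d = card (set w)"
  have inj: "inj_on f (set w)"
  proof (rule inj_onI)
    fix x y assume "x \<in> set w" "y \<in> set w" "f x = f y"
    show "x = y"
    proof (rule ccontr)
      assume "x \<noteq> y"
      then consider "x < y" | "y < x" by linarith
      then show False
      proof cases
        case 1 then show False using card_le_strict[of "set w" x y] \<open>f x = f y\<close> \<open>x \<in> set w\<close> \<open>y \<in> set w\<close> unfolding f_def by simp
      next
        case 2 then show False using card_le_strict[of "set w" y x] \<open>f x = f y\<close> \<open>x \<in> set w\<close> \<open>y \<in> set w\<close> unfolding f_def by simp
      qed
    qed
  qed
  have sub: "f ` set w \<subseteq> {1..d}"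
  proof
    fix z assume "z \<in> f ` set w"
    then obtain x where x: "x \<in> set w" "z = f x" by auto
    have "{y \<in> set w. y \<le> x} \<noteq> {}" using x by auto
    then have "1 \<le> z" using x unfolding f_def by (simp add: Suc_leI card_gt_0_iff)
    moreover have "z \<le> d" using x unfolding f_def d_def by (simp add: card_mono)
    ultimately show "z \<in> {1..d}" by auto
  qed
  have "card (f ` set w) = d" using card_image[OF inj] d_def by simp
  then have "f ` set w = {1..d}" using sub by (simp add: card_subset_eq)
  then show ?thesis unfolding packed_def pack_def f_def by auto
qed

lemma pack_packed: assumes "packed u" shows "pack u = u"
proof -
  obtain m where m: "set u = {1..m}" using assms packed_def by auto
  have "\<And>x. x \<in> {1..m} \<Longrightarrow> {y \<in> {1..m}. y \<le> x} = {1..x}" by auto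
  then have "\<forall>x\<in>set u. card {y \<in> set u. y \<le> x} = x" unfolding m by simp
  then show ?thesis unfolding pack_def by (intro map_idI) blast
qed

lemma samep_packed_eq: assumes "samep u w" "packed u" "packed w" shows "u = w"
proof -
  have "pack u = pack w" using assms(1) by (rule pack_samep_eq)
  then show ?thesis using pack_packed[OF assms(2)] pack_packed[OF assms(3)] by simp
qed

lemma card_set_pack: "card (set (pack w)) = card (set w)"
proof -
  have "card (nth (pack w) ` {..<length w}) = card (nth w ` {..<length w})"
    using card_image_samep[OF samep_pack[of w], of "{..<length w}"] by simp
  moreover have "nth (pack w) ` {..<length w} = set (pack w)"
    by (auto simp: in_set_conv_nth)
  moreover have "nth w ` {..<length w} = set w"
    by (auto simp: in_set_conv_nth)
  ultimately show ?thesis by simp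
qed

lemma packed_set: assumes "packed u" shows "set u = {1..card (set u)}"
proof -
  obtain m where m: "set u = {1..m}" using assms packed_def by auto
  then show ?thesis by simp
qed


lemma in_set_drop_nth: "x \<in> set (drop n u) \<longleftrightarrow> (\<exists>k. n \<le> k \<and> k < length u \<and> u!k = x)"
proof
  assume "x \<in> set (drop n u)"
  then obtain i where "i < length (drop n u)" "drop n u ! i = x" by (auto simp: in_set_conv_nth)
  then show "\<exists>k. n \<le> k \<and> k < length u \<and> u!k = x" by (intro exI[of _ "n+i"]) auto
next
  assume "\<exists>k. n \<le> k \<and> k < length u \<and> u!k = x"
  then obtain k where k: "n \<le> k" "k < length u" "u!k = x" by auto
  then have "drop n u ! (k - n) = x" "k - n < length (drop n u)" by auto
  then show "x \<in> set (drop n u)" by (metis nth_mem)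
qed

definition lastocc0 :: "nat list \<Rightarrow> nat set" where
  "lastocc0 u = {i. i < length u \<and> u!i \<notin> set (drop (Suc i) u)}"

lemma lastocc0_alt: "lastocc0 u = {i. i < length u \<and> (\<forall>k. i < k \<and> k < length u \<longrightarrow> u!k \<noteq> u!i)}"
  unfolding lastocc0_def in_set_drop_nth by auto

lemma last_occ_lastocc0: "last_occ u = Suc ` lastocc0 u"
proof -
  have "last_occ u = {i \<in> {1..length u}. u ! (i - 1) \<notin> set (drop i u)}" by (simp add: last_occ_def)
  also have "\<dots> = Suc ` lastocc0 u"
  proof (rule set_eqI)
    fix i show "i \<in> {i \<in> {1..length u}. u ! (i - 1) \<notin> set (drop i u)} \<longleftrightarrow> i \<in> Suc ` lastocc0 u"
      by (cases i) (auto simp: lastocc0_def)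
  qed
  finally show ?thesis .
qed

lemma samep_lastocc0: assumes "samep u w" shows "lastocc0 u = lastocc0 w"
proof -
  have len: "length u = length w" using assms samep_def by auto
  show ?thesis unfolding lastocc0_alt using samep_eq[OF assms] len by auto
qed

lemma lastocc0_unique: assumes "i \<in> lastocc0 u" "k \<in> lastocc0 u" "u!i = u!k" shows "i = k"
proof (rule ccontr)
  assume "i \<noteq> k"
  then consider "i < k" | "k < i" by linarith
  then show False using assms unfolding lastocc0_alt by cases auto
qed

lemma lastocc0_exists:
  assumes "i < length u"
  shows "\<exists>e. i \<le> e \<and> e \<in> lastocc0 u \<and> u!e = u!i"
proof -
  define K where "K = {k. k < length u \<and> u!k = u!i}"
  have fin: "finite K" unfolding K_def by auto
  have iK: "i \<in> K" using assms K_def by auto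
  define e where "e = Max K"
  have eK: "e \<in> K" using fin iK e_def Max_in by blast
  have ie: "i \<le> e" using fin iK e_def by simp
  have "e \<in> lastocc0 u" unfolding lastocc0_alt
  proof (intro CollectI conjI allI impI)
    show "e < length u" using eK K_def by auto
    fix k assume "e < k \<and> k < length u"
    then show "u!k \<noteq> u!e" using eK fin unfolding K_def e_def
      by (metis (mono_tags, lifting) Max_ge leD mem_Collect_eq)
  qed
  then show ?thesis using ie eK K_def by auto
qed

lemma bij_lastocc0: "bij_betw (nth u) (lastocc0 u) (set u)"
proof (rule bij_betw_imageI)
  show "inj_on (nth u) (lastocc0 u)" by (meson inj_onI lastocc0_unique)
  show "nth u ` lastocc0 u = set u"
  proof
    show "nth u ` lastocc0 u \<subseteq> set u" by (auto simp: lastocc0_def)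
    show "set u \<subseteq> nth u ` lastocc0 u"
    proof
      fix x assume "x \<in> set u"
      then obtain i where "i < length u" "u!i = x" by (auto simp: in_set_conv_nth)
      then show "x \<in> nth u ` lastocc0 u" using lastocc0_exists by (metis image_eqI)
    qed
  qed
qed

lemma card_lastocc0: "card (lastocc0 u) = card (set u)"
  using bij_betw_same_card[OF bij_lastocc0] .

lemma card_lastocc0_less: "card {k \<in> lastocc0 u. u!k < x} = card {y \<in> set u. y < x}"
proof -
  have "bij_betw (nth u) {k \<in> lastocc0 u. u!k < x} {y \<in> set u. y < x}"
    using bij_lastocc0[of u] unfolding bij_betw_def inj_on_def by auto
  then show ?thesis by (rule bij_betw_same_card)
qed

definition sinvset :: "nat list \<Rightarrow> (nat \<times> nat) set" where
  "sinvset u = {(i, j). i < j \<and> j < length u \<and> u ! i > u ! j \<and> u ! j \<notin> set (drop (Suc j) u)}"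

lemma sinv_sinvset: "sinv u = card (sinvset u)" by (simp add: sinv_def sinvset_def)

lemma sinvset_alt: "sinvset u = {(i, j). i < j \<and> j \<in> lastocc0 u \<and> u ! i > u ! j}"
  unfolding sinvset_def lastocc0_def by auto

lemma finite_sinvset: "finite (sinvset u)"
  by (rule finite_subset[of _ "{..<length u} \<times> {..<length u}"]) (auto simp: sinvset_def)

lemma sinvset_Cons:
  "sinvset (x # u) = (\<lambda>k. (0, Suc k)) ` {k \<in> lastocc0 u. u!k < x} \<union> (\<lambda>(i,k). (Suc i, Suc k)) ` sinvset u"
proof -
  have A: "\<And>k. Suc k \<in> lastocc0 (x # u) \<longleftrightarrow> k \<in> lastocc0 u"
    unfolding lastocc0_def by auto
  show ?thesis
  proof (rule set_eqI)
    fix p :: "nat \<times> nat"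
    obtain i j where p: "p = (i, j)" by (cases p)
    show "p \<in> sinvset (x # u) \<longleftrightarrow> p \<in> (\<lambda>k. (0, Suc k)) ` {k \<in> lastocc0 u. u!k < x} \<union> (\<lambda>(i,k). (Suc i, Suc k)) ` sinvset u"
    proof (cases j)
      case 0 then show ?thesis using p by (auto simp: sinvset_alt)
    next
      case (Suc k)
      show ?thesis
      proof (cases i)
        case 0 then show ?thesis using p Suc A by (auto simp: sinvset_alt)
      next
        case (Suc i')
        then show ?thesis using p \<open>j = Suc k\<close> A by (auto simp: sinvset_alt)
      qed
    qed
  qed
qed

lemma sinv_Cons: "sinv (x # u) = sinv u + card {y \<in> set u. y < x}"
proof -
  have d: "(\<lambda>k. (0::nat, Suc k)) ` {k \<in> lastocc0 u. u!k < x} \<inter> (\<lambda>(i,k). (Suc i, Suc k)) ` sinvset u = {}"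
    by auto
  have f1: "finite ((\<lambda>k. (0::nat, Suc k)) ` {k \<in> lastocc0 u. u!k < x})"
    by (rule finite_imageI) (rule finite_subset[of _ "{..<length u}"], auto simp: lastocc0_def)
  have f2: "finite ((\<lambda>(i,k). (Suc i, Suc k)) ` sinvset u)" using finite_sinvset by simp
  have c1: "card ((\<lambda>k. (0::nat, Suc k)) ` {k \<in> lastocc0 u. u!k < x}) = card {y \<in> set u. y < x}"
    by (subst card_image) (auto simp: inj_on_def card_lastocc0_less)
  have c2: "card ((\<lambda>(i,k). (Suc i, Suc k)) ` sinvset u) = card (sinvset u)"
    by (rule card_image) (auto simp: inj_on_def)
  show ?thesis unfolding sinv_sinvset sinvset_Cons
    using card_Un_disjoint[OF f1 f2 d] c1 c2 by simp
qed

lemma samep_sinv: assumes "samep u w" shows "sinv u = sinv w"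
proof -
  have len: "length u = length w" using assms samep_def by auto
  have lt: "\<And>i j. i < j \<Longrightarrow> j \<in> lastocc0 w \<Longrightarrow> (u!j < u!i \<longleftrightarrow> w!j < w!i)"
  proof -
    fix i j assume ij: "i < j" "j \<in> lastocc0 w"
    then have "j < length u" "i < length u" using len by (auto simp: lastocc0_def)
    then show "(u!j < u!i \<longleftrightarrow> w!j < w!i)" using assms unfolding samep_def by blast
  qed
  have "sinvset u = sinvset w"
    unfolding sinvset_alt samep_lastocc0[OF assms]
    using lt by blast
  then show ?thesis by (simp add: sinv_sinvset)
qed

definition cr :: "nat list \<Rightarrow> nat \<Rightarrow> nat" where
  "cr v x = card {y \<in> set v. y < x}"

lemma sinv_sorted_append:
  "sorted p \<Longrightarrow> sinv (p @ v) = sinv v + sum_list (map (cr v) p)"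
proof (induction p)
  case Nil then show ?case by simp
next
  case (Cons x p)
  have "{y \<in> set (p @ v). y < x} = {y \<in> set v. y < x}" using Cons.prems by auto
  then show ?case using Cons by (simp add: sinv_Cons cr_def)
qed

lemma sinv_sorted: "sorted p \<Longrightarrow> sinv p = 0"
  using sinv_sorted_append[of p "[]"] by (simp add: cr_def sinv_def)

lemma samep_sorted: assumes "samep u w" shows "sorted u \<longleftrightarrow> sorted w"
proof -
  have len: "length u = length w" using assms samep_def by auto
  have eqv: "\<And>i j. i \<le> j \<Longrightarrow> j < length u \<Longrightarrow> (u!i \<le> u!j \<longleftrightarrow> w!i \<le> w!j)"
    using samep_le[OF assms] by simp
  show ?thesis
  proof
    assume su: "sorted u"
    show "sorted w" unfolding sorted_iff_nth_mono
    proof (intro allI impI)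
      fix i j assume ij: "i \<le> j" "j < length w"
      then show "w!i \<le> w!j" using su[unfolded sorted_iff_nth_mono] eqv[of i j] len by simp
    qed
  next
    assume su: "sorted w"
    show "sorted u" unfolding sorted_iff_nth_mono
    proof (intro allI impI)
      fix i j assume ij: "i \<le> j" "j < length u"
      then show "u!i \<le> u!j" using su[unfolded sorted_iff_nth_mono] eqv[of i j] len by simp
    qed
  qed
qed


fun ps :: "nat list \<Rightarrow> nat list" where
  "ps [] = []"
| "ps (x # I) = x # map ((+) x) (ps I)"

definition dif :: "nat list \<Rightarrow> nat \<Rightarrow> nat list" where
  "dif ds c = map (\<lambda>(a, b). a - b) (zip ds (c # ds))"

lemma comp_of_set_dif: "comp_of_set L = dif (sorted_list_of_set L) 0"
  by (simp add: comp_of_set_def dif_def Let_def)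

lemma ps_pos: "\<forall>x\<in>set I. 0 < x \<Longrightarrow> \<forall>y\<in>set (ps I). 0 < y"
  by (induction I) auto

lemma ps_strict: "\<forall>x\<in>set I. 0 < x \<Longrightarrow> sorted_wrt (<) (ps I)"
proof (induction I)
  case Nil then show ?case by simp
next
  case (Cons x I)
  then have "\<forall>y\<in>set (ps I). 0 < y" using Cons.prems ps_pos[of I] by simp
  then show ?case using Cons by (auto simp: sorted_wrt_map)
qed

lemma length_ps[simp]: "length (ps I) = length I"
  by (induction I) auto

lemma dif_ps: "dif (map ((+) c) (ps I)) c = I"
proof (induction I arbitrary: c)
  case Nil then show ?case by (simp add: dif_def)
next
  case (Cons x I)
  have e: "map ((+) c) (ps (x # I)) = (c + x) # map ((+) (c + x)) (ps I)"
    by (simp add: add.assoc comp_def)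
  have d: "dif ((c + x) # map ((+) (c + x)) (ps I)) c = x # dif (map ((+) (c + x)) (ps I)) (c + x)"
    by (simp add: dif_def)
  have "dif (map ((+) (c + x)) (ps I)) (c + x) = I" by (rule Cons.IH)
  then show ?case unfolding e by (simp only: d)
qed

lemma comp_of_set_ps:
  assumes "\<forall>x\<in>set I. 0 < x" shows "comp_of_set (set (ps I)) = I"
proof -
  have "sorted_list_of_set (set (ps I)) = ps I"
    using ps_strict[OF assms] by (simp add: sorted_list_of_set.idem_if_sorted_distinct strict_sorted_iff)
  moreover have "map ((+) (0::nat)) xs = xs" for xs by (induction xs) auto
  ultimately show ?thesis using dif_ps[of 0 I] by (simp add: comp_of_set_dif)
qed

lemma ps_dif:
  "sorted_wrt (<) ds \<Longrightarrow> \<forall>x\<in>set ds. c < x \<Longrightarrow> ps (dif ds c) = map (\<lambda>x. x - c) ds"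
proof (induction ds arbitrary: c)
  case Nil then show ?case by (simp add: dif_def)
next
  case (Cons d ds)
  have "dif (d # ds) c = (d - c) # dif ds d" by (simp add: dif_def)
  moreover have "ps (dif ds d) = map (\<lambda>x. x - d) ds" using Cons by auto
  moreover have "map ((+) (d - c)) (map (\<lambda>x. x - d) ds) = map (\<lambda>x. x - c) ds" using Cons.prems by auto
  ultimately show ?case using Cons.prems by simp
qed

lemma ps_comp_of_set:
  assumes "finite L" "0 \<notin> L" shows "set (ps (comp_of_set L)) = L"
proof -
  define ds where "ds = sorted_list_of_set L"
  have s: "sorted_wrt (<) ds" unfolding ds_def by simp
  have p: "\<forall>x\<in>set ds. 0 < x" using assms unfolding ds_def by (auto intro: gr0I)
  have "ps (dif ds 0) = ds" using ps_dif[OF s p] by simp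
  then show ?thesis using assms ds_def by (simp add: comp_of_set_dif)
qed

lemma finite_last_occ: "finite (last_occ u)" and zero_last_occ: "0 \<notin> last_occ u"
  by (auto simp: last_occ_def)

lemma WC_iff:
  assumes "\<forall>x\<in>set I. 0 < x"
  shows "WC u = I \<longleftrightarrow> last_occ u = set (ps I)"
proof
  assume "WC u = I"
  then show "last_occ u = set (ps I)"
    using ps_comp_of_set[OF finite_last_occ zero_last_occ, of u] by (simp add: WC_def)
next
  assume "last_occ u = set (ps I)"
  then show "WC u = I" using comp_of_set_ps[OF assms] by (simp add: WC_def)
qed

section \<open>Sequence sums\<close>

definition Valid :: "nat \<Rightarrow> nat \<Rightarrow> nat list set" where
  "Valid j N = {s. length s = j \<and> sorted s \<and> (\<forall>x\<in>set s. x < N)}"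

definition Aq :: "'a::field \<Rightarrow> nat \<Rightarrow> nat \<Rightarrow> 'a" where
  "Aq q j N = (\<Sum>s\<in>Valid j N. q ^ sum_list s)"

lemma finite_Valid: "finite (Valid j N)"
proof (rule finite_subset)
  show "Valid j N \<subseteq> {s. set s \<subseteq> {..<N} \<and> length s = j}" by (auto simp: Valid_def)
  show "finite {s. set s \<subseteq> {..<N} \<and> length s = j}" by (rule finite_lists_length_eq) simp
qed

lemma qbinom_zero: "n < k \<Longrightarrow> qbinom q n k = 0"
proof (induction n arbitrary: k)
  case 0 then show ?case by (cases k) auto
next
  case (Suc n) then show ?case by (cases k) auto
qed

lemma Valid_Suc_0: "Valid (Suc j) 0 = {}"
  by (auto simp: Valid_def)

lemma Valid_0: "Valid 0 N = {[]}"
  by (auto simp: Valid_def)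

lemma Valid_split:
  "Valid (Suc j) (Suc N) = (Cons 0) ` Valid j (Suc N) \<union> (map Suc) ` Valid (Suc j) N"
proof
  show "Valid (Suc j) (Suc N) \<subseteq> (Cons 0) ` Valid j (Suc N) \<union> (map Suc) ` Valid (Suc j) N"
  proof
    fix s assume s: "s \<in> Valid (Suc j) (Suc N)"
    then obtain x s' where xs: "s = x # s'" by (auto simp: Valid_def length_Suc_conv)
    show "s \<in> (Cons 0) ` Valid j (Suc N) \<union> (map Suc) ` Valid (Suc j) N"
    proof (cases x)
      case 0 then show ?thesis using s xs by (auto simp: Valid_def)
    next
      case (Suc y)
      then have pos: "\<forall>z\<in>set s. 0 < z" using s xs by (auto simp: Valid_def)
      define t where "t = map (\<lambda>z. z - 1) s"
      have st: "s = map Suc t" unfolding t_def using pos by (induction s) auto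
      have "t \<in> Valid (Suc j) N" using s st by (auto simp: Valid_def sorted_map)
      then show ?thesis using st by blast
    qed
  qed
next
  show "(Cons 0) ` Valid j (Suc N) \<union> (map Suc) ` Valid (Suc j) N \<subseteq> Valid (Suc j) (Suc N)"
    by (auto simp: Valid_def sorted_map)
qed

lemma sum_list_map_Suc: "sum_list (map Suc s) = sum_list s + length s"
  by (induction s) auto

lemma Aq_rec: "Aq q (Suc j) (Suc N) = Aq q j (Suc N) + q ^ Suc j * Aq q (Suc j) N"
proof -
  have d: "(Cons 0) ` Valid j (Suc N) \<inter> (map Suc) ` Valid (Suc j) N = {}" by auto
  have "Aq q (Suc j) (Suc N) = (\<Sum>s\<in>(Cons 0) ` Valid j (Suc N). q ^ sum_list s) + (\<Sum>s\<in>(map Suc) ` Valid (Suc j) N. q ^ sum_list s)"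
    unfolding Aq_def Valid_split by (rule sum.union_disjoint) (use d finite_Valid in auto)
  also have "(\<Sum>s\<in>(Cons 0) ` Valid j (Suc N). q ^ sum_list s) = Aq q j (Suc N)"
    unfolding Aq_def by (subst sum.reindex) (auto simp: inj_on_def)
  also have "(\<Sum>s\<in>(map Suc) ` Valid (Suc j) N. q ^ sum_list s) = q ^ Suc j * Aq q (Suc j) N"
    unfolding Aq_def
    by (subst sum.reindex) (auto simp: inj_on_def sum_list_map_Suc sum_distrib_left power_add Valid_def mult_ac)
  finally show ?thesis .
qed

lemma Aq_formula: "Aq q j (Suc N) = qbinom q (N + j) j"
proof (induction j arbitrary: N)
  case 0 then show ?case by (simp add: Aq_def Valid_0)
next
  case (Suc j)
  note outer = Suc.IH
  show ?case
  proof (induction N)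
    case 0
    have "Aq q (Suc j) 0 = 0" by (simp add: Aq_def Valid_Suc_0)
    have z: "qbinom q j (Suc j) = 0" by (rule qbinom_zero) simp
    show ?case using Aq_rec[of q j 0] outer[of 0] z \<open>Aq q (Suc j) 0 = 0\<close> by simp
  next
    case (Suc N)
    then show ?case using Aq_rec[of q j "Suc N"] outer[of "Suc N"] by simp
  qed
qed


definition seqw :: "nat \<Rightarrow> nat list \<Rightarrow> nat list" where
  "seqw j u = map (cr (drop j u)) (take j u)"

definition Fib :: "nat \<Rightarrow> nat list \<Rightarrow> nat set \<Rightarrow> nat list set" where
  "Fib j v' E0 = {u. packed u \<and> length u = j + length v' \<and> sorted (take j u)
                    \<and> pack (drop j u) = v' \<and> lastocc0 u \<inter> {..<j} = E0}"


lemma ka: "0 < (B::nat) \<Longrightarrow> 2*a*B < 2*b*B \<longleftrightarrow> a < b"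
  by simp

lemma kb:
  fixes B e a t :: nat
  assumes "e < B"
  shows "2*a*B < (2*t+1)*B + e \<longleftrightarrow> a \<le> t"
proof
  assume h: "2*a*B < (2*t+1)*B + e"
  show "a \<le> t"
  proof (rule ccontr)
    assume "\<not> a \<le> t"
    then have "2*t+2 \<le> 2*a" by simp
    then have "(2*t+2)*B \<le> 2*a*B" by (rule mult_le_mono1)
    moreover have "(2*t+2)*B = (2*t+1)*B + B" by (simp add: algebra_simps)
    ultimately show False using h assms by linarith
  qed
next
  assume "a \<le> t"
  then have "2*a \<le> 2*t" by simp
  then have "2*a*B \<le> 2*t*B" by (rule mult_le_mono1)
  moreover have "(2*t+1)*B = 2*t*B + B" by (simp add: algebra_simps)
  ultimately show "2*a*B < (2*t+1)*B + e" using assms by linarith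
qed

lemma kc:
  fixes B e a t :: nat
  assumes "e < B"
  shows "(2*t+1)*B + e < 2*a*B \<longleftrightarrow> t < a"
proof
  assume h: "(2*t+1)*B + e < 2*a*B"
  show "t < a"
  proof (rule ccontr)
    assume "\<not> t < a"
    then have "2*a \<le> 2*t" by simp
    then have "2*a*B \<le> 2*t*B" by (rule mult_le_mono1)
    moreover have "(2*t+1)*B = 2*t*B + B" by (simp add: algebra_simps)
    ultimately show False using h by linarith
  qed
next
  assume "t < a"
  then have "2*t+2 \<le> 2*a" by simp
  then have "(2*t+2)*B \<le> 2*a*B" by (rule mult_le_mono1)
  moreover have "(2*t+2)*B = (2*t+1)*B + B" by (simp add: algebra_simps)
  ultimately show "(2*t+1)*B + e < 2*a*B" using assms by linarith
qed

lemma ke: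
  fixes B e a t :: nat
  assumes "e < B"
  shows "(2*t+1)*B + e \<noteq> 2*a*B"
  using kb[OF assms, of a t] kc[OF assms, of t a] by auto

lemma kd:
  fixes B e e' t t' :: nat
  assumes "e < B" "e' < B"
  shows "(2*t+1)*B + e < (2*t'+1)*B + e' \<longleftrightarrow> t < t' \<or> (t = t' \<and> e < e')"
proof (cases "t < t'")
  case True
  then have "2*t+2 \<le> 2*t'+1" by simp
  then have "(2*t+2)*B \<le> (2*t'+1)*B" by (rule mult_le_mono1)
  moreover have "(2*t+2)*B = (2*t+1)*B + B" by (simp add: algebra_simps)
  ultimately show ?thesis using True assms by linarith
next
  case False
  show ?thesis
  proof (cases "t = t'")
    case True then show ?thesis by simp
  next
    case False
    then have "t' < t" using \<open>\<not> t < t'\<close> by simp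
    then have "2*t'+2 \<le> 2*t+1" by simp
    then have "(2*t'+2)*B \<le> (2*t+1)*B" by (rule mult_le_mono1)
    moreover have "(2*t'+2)*B = (2*t'+1)*B + B" by (simp add: algebra_simps)
    ultimately show ?thesis using \<open>t' < t\<close> assms by linarith
  qed
qed

lemma kf:
  fixes B e e' t t' :: nat
  assumes "e < B" "e' < B" "(2*t+1)*B + e = (2*t'+1)*B + e'"
  shows "t = t' \<and> e = e'"
  using kd[OF assms(1,2)] kd[OF assms(2,1)] assms(3) by (metis less_irrefl linorder_neq_iff)

section \<open>Keys\<close>

definition trun :: "nat set \<Rightarrow> nat list \<Rightarrow> nat \<Rightarrow> bool" where
  "trun E0 s i \<longleftrightarrow> (\<exists>e\<in>E0. i \<le> e \<and> s!e = s!i)"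

definition ekey :: "nat set \<Rightarrow> nat list \<Rightarrow> nat \<Rightarrow> nat" where
  "ekey E0 s i = (LEAST e. e \<in> E0 \<and> i \<le> e \<and> s!e = s!i)"

definition pkey :: "nat \<Rightarrow> nat set \<Rightarrow> nat list \<Rightarrow> nat \<Rightarrow> nat" where
  "pkey j E0 s i = (if trun E0 s i then (2*(s!i)+1)*Suc j + ekey E0 s i else 2*(s!i+1)*Suc j)"

definition keys :: "nat \<Rightarrow> nat set \<Rightarrow> nat list \<Rightarrow> nat list \<Rightarrow> nat list" where
  "keys j E0 v' s = map (pkey j E0 s) [0..<j] @ map (\<lambda>r. 2*r*Suc j) v'"

lemma ekey_prop:
  assumes "trun E0 s i"
  shows "ekey E0 s i \<in> E0 \<and> i \<le> ekey E0 s i \<and> s!(ekey E0 s i) = s!i"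
proof -
  obtain e where e: "e \<in> E0 \<and> i \<le> e \<and> s!e = s!i" using assms trun_def by auto
  show ?thesis unfolding ekey_def
    using LeastI[where P = "\<lambda>e. e \<in> E0 \<and> i \<le> e \<and> s!e = s!i", OF e] by blast
qed

lemma ekey_le:
  assumes "e \<in> E0" "i \<le> e" "s!e = s!i"
  shows "ekey E0 s i \<le> e"
  unfolding ekey_def by (rule Least_le) (use assms in auto)

lemma ekey_self:
  assumes "i \<in> E0"
  shows "trun E0 s i \<and> ekey E0 s i = i"
proof -
  have "trun E0 s i" using assms trun_def by auto
  moreover have "ekey E0 s i = i"
    using ekey_le[OF assms, of i s] ekey_prop[OF \<open>trun E0 s i\<close>] by simp
  ultimately show ?thesis by simp
qed

lemma keys_nth_p: "i < j \<Longrightarrow> keys j E0 v' s ! i = pkey j E0 s i"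
  by (simp add: keys_def nth_append)

lemma keys_nth_v: "c < length v' \<Longrightarrow> keys j E0 v' s ! (j + c) = 2*(v'!c)*Suc j"
  by (simp add: keys_def nth_append)

lemma length_keys[simp]: "length (keys j E0 v' s) = j + length v'"
  by (simp add: keys_def)

lemma ekey_lt:
  assumes "E0 \<subseteq> {..<j}" "trun E0 s i"
  shows "ekey E0 s i < Suc j"
  using ekey_prop[OF assms(2)] assms(1) by auto

lemma card_less_samep:
  assumes "samep u w" "i < length u"
  shows "card {y \<in> set (drop j u). y < u!i} = card {y \<in> set (drop j w). y < w!i}"
proof -
  have len: "length u = length w" using assms samep_def by auto
  define P where "P = {k. j \<le> k \<and> k < length u \<and> u!k < u!i}"
  have 1: "{y \<in> set (drop j u). y < u!i} = nth u ` P"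
    unfolding P_def in_set_drop_nth by auto
  have "P = {k. j \<le> k \<and> k < length u \<and> w!k < w!i}"
    unfolding P_def using assms len unfolding samep_def by auto
  then have 2: "{y \<in> set (drop j w). y < w!i} = nth w ` P"
    unfolding in_set_drop_nth using len by auto
  have "P \<subseteq> {..<length u}" unfolding P_def by auto
  then show ?thesis using 1 2 card_image_samep[OF assms(1)] by simp
qed

lemma samep_map_mult:
  assumes "0 < (B::nat)" shows "samep (map (\<lambda>r. 2*r*B) v) v"
  unfolding samep_def using assms by auto

context
  fixes j :: nat and E0 :: "nat set" and v' :: "nat list"
  assumes pv: "packed v'" and E0j: "E0 \<subseteq> {..<j}" and j0: "0 < j"
begin

lemma setv': "set v' = {1..card (set v')}"
  using packed_set[OF pv] .

lemma pkey_le: "pkey j E0 s i \<le> 2*(s!i+1)*Suc j"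
proof (cases "trun E0 s i")
  case True
  have "ekey E0 s i < Suc j" using ekey_lt[OF E0j True] .
  moreover have "2*(s!i+1)*Suc j = (2*(s!i)+1)*Suc j + Suc j" by (simp add: algebra_simps)
  ultimately show ?thesis using True by (simp add: pkey_def)
next
  case False then show ?thesis by (simp add: pkey_def)
qed

lemma pkey_ge: "2*(s!i)*Suc j \<le> pkey j E0 s i"
proof (cases "trun E0 s i")
  case True
  have "(2*(s!i)+1)*Suc j = 2*(s!i)*Suc j + Suc j" by (simp add: algebra_simps)
  then show ?thesis using True by (simp add: pkey_def)
next
  case False then show ?thesis by (simp add: pkey_def)
qed

lemma pkey_mono:
  assumes "sorted s" "length s = j" "a \<le> b" "b < j"
  shows "pkey j E0 s a \<le> pkey j E0 s b"
proof -
  have sab: "s!a \<le> s!b" using assms by (simp add: sorted_iff_nth_mono)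
  show ?thesis
  proof (cases "s!a < s!b")
    case True
    have "2*(s!a+1) \<le> 2*(s!b)" using True by simp
    then have "2*(s!a+1)*Suc j \<le> 2*(s!b)*Suc j" by (rule mult_le_mono1)
    then show ?thesis using pkey_le[of s a] pkey_ge[of s b] by linarith
  next
    case False
    then have eq: "s!a = s!b" using sab by simp
    show ?thesis
    proof (cases "trun E0 s b")
      case True
      then obtain e where e: "e \<in> E0" "b \<le> e" "s!e = s!b" unfolding trun_def by blast
      have ta: "trun E0 s a" unfolding trun_def using e eq assms(3) by (intro bexI[of _ e]) auto
      have "ekey E0 s a \<le> ekey E0 s b"
        using ekey_prop[OF True] ekey_le[of "ekey E0 s b" E0 a s] eq assms(3) by simp
      then show ?thesis using True ta eq by (simp add: pkey_def)
    next
      case False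
      then show ?thesis using pkey_le[of s a] eq by (simp add: pkey_def)
    qed
  qed
qed

definition NN :: nat where "NN = card (set v') + (if j - 1 \<in> E0 then 1 else 0)"

lemma Valid_props:
  assumes "s \<in> Valid j NN"
  shows "sorted s" "length s = j" "\<And>i. i < j \<Longrightarrow> s!i \<le> card (set v')"
    "\<And>i. i < j \<Longrightarrow> \<not> trun E0 s i \<Longrightarrow> s!i < card (set v')"
proof -
  show ss: "sorted s" and ls: "length s = j" using assms by (auto simp: Valid_def)
  have lt: "\<And>i. i < j \<Longrightarrow> s!i < NN" using assms ls by (auto simp: Valid_def)
  show le: "\<And>i. i < j \<Longrightarrow> s!i \<le> card (set v')"
    using lt unfolding NN_def by (fastforce split: if_splits)
  show "\<And>i. i < j \<Longrightarrow> \<not> trun E0 s i \<Longrightarrow> s!i < card (set v')"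
  proof (rule ccontr)
    fix i assume i: "i < j" "\<not> trun E0 s i" "\<not> s!i < card (set v')"
    then have si: "s!i = card (set v')" using le by fastforce
    have jl: "j - 1 < j" using j0 by simp
    have "s!i \<le> s!(j-1)" using ss ls i by (simp add: sorted_iff_nth_mono)
    then have sj: "s!(j-1) = card (set v')" using le[OF jl] si by simp
    have "j - 1 \<in> E0" using lt[OF jl] sj unfolding NN_def by (auto split: if_splits)
    then have "trun E0 s i" unfolding trun_def using sj si i by (intro bexI[of _ "j-1"]) auto
    then show False using i by simp
  qed
qed

lemma Phi_sorted:
  assumes "s \<in> Valid j NN"
  shows "sorted (take j (pack (keys j E0 v' s)))"
proof -
  have "sorted (take j (keys j E0 v' s))"
    unfolding sorted_iff_nth_mono
  proof (intro allI impI)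
    fix a b assume ab: "a \<le> b" "b < length (take j (keys j E0 v' s))"
    then have "b < j" by simp
    then show "take j (keys j E0 v' s) ! a \<le> take j (keys j E0 v' s) ! b"
      using pkey_mono[OF Valid_props(1,2)[OF assms] ab(1)] ab keys_nth_p by simp
  qed
  then show ?thesis using samep_sorted[OF samep_take[OF samep_pack]] by blast
qed

lemma Phi_drop:
  shows "pack (drop j (pack (keys j E0 v' s))) = v'"
proof -
  have "pack (drop j (pack (keys j E0 v' s))) = pack (drop j (keys j E0 v' s))"
    using pack_samep_eq[OF samep_sym[OF samep_drop[OF samep_pack]]] by simp
  also have "drop j (keys j E0 v' s) = map (\<lambda>r. 2*r*Suc j) v'" by (simp add: keys_def)
  also have "pack (map (\<lambda>r. 2*r*Suc j) v') = pack v'"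
    by (rule pack_samep_eq[OF samep_map_mult]) simp
  also have "\<dots> = v'" by (rule pack_packed[OF pv])
  finally show ?thesis .
qed

lemma Phi_lastocc:
  assumes "s \<in> Valid j NN"
  shows "lastocc0 (pack (keys j E0 v' s)) \<inter> {..<j} = E0"
proof -
  let ?K = "keys j E0 v' s"
  have L: "lastocc0 (pack ?K) = lastocc0 ?K" using samep_lastocc0[OF samep_pack] by simp
  have "\<And>i. i < j \<Longrightarrow> i \<in> lastocc0 ?K \<longleftrightarrow> i \<in> E0"
  proof -
    fix i assume i: "i < j"
    show "i \<in> lastocc0 ?K \<longleftrightarrow> i \<in> E0"
    proof
      assume iE: "i \<in> E0"
      have ki: "?K!i = (2*(s!i)+1)*Suc j + i"
        using ekey_self[OF iE, of s] i keys_nth_p by (simp add: pkey_def)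
      have "\<forall>k. i < k \<and> k < length ?K \<longrightarrow> ?K!k \<noteq> ?K!i"
      proof (intro allI impI)
        fix k assume k: "i < k \<and> k < length ?K"
        show "?K!k \<noteq> ?K!i"
        proof (cases "k < j")
          case True
          show ?thesis
          proof (cases "trun E0 s k")
            case True
            have kk: "?K!k = (2*(s!k)+1)*Suc j + ekey E0 s k"
              using True \<open>k < j\<close> keys_nth_p by (simp add: pkey_def)
            have "ekey E0 s k \<noteq> i" using ekey_prop[OF True] k by auto
            then show ?thesis using kk ki kf[of "ekey E0 s k" "Suc j" i "s!k" "s!i"] ekey_lt[OF E0j True] i
              by auto
          next
            case False
            have kk: "?K!k = 2*(s!k+1)*Suc j"
              using False \<open>k < j\<close> keys_nth_p by (simp add: pkey_def)
            show ?thesis using kk ki ke[of i "Suc j" "s!i" "s!k+1"] i by auto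
          qed
        next
          case False
          then obtain c where c: "k = j + c" "c < length v'" using k by (metis add_diff_inverse_nat add_less_cancel_left length_keys)
          have "?K!k = 2*(v'!c)*Suc j" using c keys_nth_v by simp
          then show ?thesis using ki ke[of i "Suc j" "s!i" "v'!c"] i by auto
        qed
      qed
      then show "i \<in> lastocc0 ?K" unfolding lastocc0_alt using i by simp
    next
      assume iE: "i \<in> lastocc0 ?K"
      show "i \<in> E0"
      proof (rule ccontr)
        assume niE: "i \<notin> E0"
        have "\<exists>k. i < k \<and> k < length ?K \<and> ?K!k = ?K!i"
        proof (cases "trun E0 s i")
          case True
          define e0 where "e0 = ekey E0 s i"
          have e0: "e0 \<in> E0" "i \<le> e0" "s!e0 = s!i" using ekey_prop[OF True] e0_def by auto
          have ie: "i < e0" using e0 niE by (cases "i = e0") auto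
          have ej: "e0 < j" using e0 E0j by auto
          have "?K!e0 = (2*(s!e0)+1)*Suc j + e0"
            using ekey_self[OF e0(1), of s] ej keys_nth_p by (simp add: pkey_def)
          also have "\<dots> = ?K!i" using True e0 e0_def i keys_nth_p by (simp add: pkey_def)
          finally show ?thesis using ie ej by (intro exI[of _ e0]) simp
        next
          case False
          have "s!i < card (set v')" using Valid_props(4)[OF assms i False] .
          then have "Suc (s!i) \<in> set v'" using setv' by auto
          then obtain c where c: "c < length v'" "v'!c = Suc (s!i)" by (auto simp: in_set_conv_nth)
          have "?K!(j+c) = 2*(s!i+1)*Suc j" using c keys_nth_v by simp
          also have "\<dots> = ?K!i" using False i keys_nth_p by (simp add: pkey_def)
          finally show ?thesis using c i by (intro exI[of _ "j+c"]) simp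
        qed
        then show False using iE unfolding lastocc0_alt by auto
      qed
    qed
  qed
  moreover have "\<forall>i\<in>lastocc0 ?K. True" by simp
  ultimately show ?thesis using L E0j by auto
qed

lemma Phi_Fib:
  assumes "s \<in> Valid j NN"
  shows "pack (keys j E0 v' s) \<in> Fib j v' E0"
  unfolding Fib_def using packed_pack Phi_sorted[OF assms] Phi_drop Phi_lastocc[OF assms]
  by simp

lemma seqw_Phi:
  assumes "s \<in> Valid j NN"
  shows "seqw j (pack (keys j E0 v' s)) = s"
proof -
  let ?K = "keys j E0 v' s"
  have ls: "length s = j" using Valid_props(2)[OF assms] .
  show ?thesis
  proof (rule nth_equalityI)
    show "length (seqw j (pack ?K)) = length s" using ls by (simp add: seqw_def)
    fix i assume "i < length (seqw j (pack ?K))"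
    then have i: "i < j" by (simp add: seqw_def)
    have "seqw j (pack ?K) ! i = card {y \<in> set (drop j (pack ?K)). y < pack ?K ! i}"
      using i by (simp add: seqw_def cr_def)
    also have "\<dots> = card {y \<in> set (drop j ?K). y < ?K ! i}"
      using card_less_samep[OF samep_sym[OF samep_pack], where i=i and j=j] i by simp
    also have "{y \<in> set (drop j ?K). y < ?K ! i} = (\<lambda>r. 2*r*Suc j) ` {1..s!i}"
    proof -
      have d: "set (drop j ?K) = (\<lambda>r. 2*r*Suc j) ` {1..card (set v')}"
        using setv' by (simp add: keys_def)
      have "\<And>r. 2*r*Suc j < ?K!i \<longleftrightarrow> r \<le> s!i"
      proof -
        fix r
        show "2*r*Suc j < ?K!i \<longleftrightarrow> r \<le> s!i"
        proof (cases "trun E0 s i")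
          case True
          then show ?thesis using i keys_nth_p kb[OF ekey_lt[OF E0j True], of r "s!i"]
            by (simp add: pkey_def)
        next
          case False
          have kI: "?K!i = 2*(s!i+1)*Suc j" using False i keys_nth_p by (simp add: pkey_def)
          have e1: "2*r*Suc j < ?K!i \<longleftrightarrow> r < s!i+1" unfolding kI by (rule ka) simp
          have e2: "r < s!i+1 \<longleftrightarrow> r \<le> s!i" by linarith
          show ?thesis using e1 e2 by blast
        qed
      qed
      note H = this
      have sm: "s!i \<le> card (set v')" using Valid_props(3)[OF assms i] .
      show ?thesis unfolding d
      proof
        show "{y \<in> (\<lambda>r. 2*r*Suc j) ` {1..card (set v')}. y < ?K!i} \<subseteq> (\<lambda>r. 2*r*Suc j) ` {1..s!i}"
        proof
          fix y assume "y \<in> {y \<in> (\<lambda>r. 2*r*Suc j) ` {1..card (set v')}. y < ?K!i}"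
          then obtain r where r: "r \<in> {1..card (set v')}" "y = 2*r*Suc j" "2*r*Suc j < ?K!i" by blast
          then have "r \<in> {1..s!i}" using H[of r] by simp
          then show "y \<in> (\<lambda>r. 2*r*Suc j) ` {1..s!i}" using r(2) by blast
        qed
        show "(\<lambda>r. 2*r*Suc j) ` {1..s!i} \<subseteq> {y \<in> (\<lambda>r. 2*r*Suc j) ` {1..card (set v')}. y < ?K!i}"
        proof
          fix y assume "y \<in> (\<lambda>r. 2*r*Suc j) ` {1..s!i}"
          then obtain r where r: "r \<in> {1..s!i}" "y = 2*r*Suc j" by blast
          then have "r \<in> {1..card (set v')}" "2*r*Suc j < ?K!i" using H[of r] sm by auto
          then show "y \<in> {y \<in> (\<lambda>r. 2*r*Suc j) ` {1..card (set v')}. y < ?K!i}" using r(2) by blast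
        qed
      qed
    qed
    also have "card ((\<lambda>r. 2*r*Suc j) ` {1..s!i}) = s!i"
    proof -
      have "inj_on (\<lambda>r. 2*r*Suc j) {1..s!i}"
      proof (rule inj_onI)
        fix x y assume "2*x*Suc j = 2*y*Suc j"
        then have "2*x = 2*y" by (simp only: mult_cancel2) simp
        then show "x = y" by simp
      qed
      then show ?thesis by (simp add: card_image)
    qed
    finally show "seqw j (pack ?K) ! i = s ! i" .
  qed
qed


lemma samep_from:
  assumes "length K = length u"
    and "\<And>a b. a < length u \<Longrightarrow> b < length u \<Longrightarrow> u!a < u!b \<Longrightarrow> K!a < K!b"
    and "\<And>a b. a < length u \<Longrightarrow> b < length u \<Longrightarrow> u!a = u!b \<Longrightarrow> K!a = K!b"
  shows "samep K u"
  unfolding samep_def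
proof (intro conjI allI impI)
  show "length K = length u" by fact
  fix a b assume a: "a < length K" and b: "b < length K"
  show "K!a < K!b \<longleftrightarrow> u!a < u!b"
  proof
    assume h: "K!a < K!b"
    show "u!a < u!b"
    proof (rule ccontr)
      assume "\<not> u!a < u!b"
      then consider "u!b < u!a" | "u!a = u!b" by linarith
      then show False
      proof cases
        case 1 then have "K!b < K!a" using assms(2)[of b a] a b assms(1) by simp
        then show False using h by simp
      next
        case 2 then have "K!a = K!b" using assms(3)[of a b] a b assms(1) by simp
        then show False using h by simp
      qed
    qed
  next
    assume "u!a < u!b" then show "K!a < K!b" using assms(2)[of a b] a b assms(1) by simp
  qed
qed

lemma cardlt_mono: "(x::nat) \<le> y \<Longrightarrow> card {z \<in> V. z < x} \<le> card {z \<in> V. z < y}" if "finite V"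
  by (rule card_mono) (use that in auto)

lemma cardlt_strict:
  fixes V :: "nat set"
  assumes "finite V" "x \<in> V" "x < y"
  shows "card {z \<in> V. z < x} < card {z \<in> V. z < y}"
proof (rule psubset_card_mono)
  show "{z \<in> V. z < x} \<subset> {z \<in> V. z < y}"
  proof -
    have sub: "{z \<in> V. z < x} \<subseteq> {z \<in> V. z < y}" using assms by auto
    have "x \<notin> {z \<in> V. z < x}" "x \<in> {z \<in> V. z < y}" using assms by auto
    then show ?thesis using sub by blast
  qed
qed (use assms in auto)

lemma G1:
  fixes V :: "nat set"
  assumes "finite V" "y \<in> V" "x < y"
  shows "card {z \<in> V. z < x} < card {z \<in> V. z \<le> y}"
proof (rule psubset_card_mono)
  show "{z \<in> V. z < x} \<subset> {z \<in> V. z \<le> y}"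
  proof -
    have sub: "{z \<in> V. z < x} \<subseteq> {z \<in> V. z \<le> y}" using assms by auto
    have "y \<notin> {z \<in> V. z < x}" "y \<in> {z \<in> V. z \<le> y}" using assms by auto
    then show ?thesis using sub by blast
  qed
qed (use assms in auto)

lemma G2:
  fixes V :: "nat set"
  assumes "finite V" "y < x"
  shows "card {z \<in> V. z \<le> y} \<le> card {z \<in> V. z < x}"
  by (rule card_mono) (use assms in auto)

lemma rk_in:
  fixes V :: "nat set"
  assumes "finite V" "x \<in> V"
  shows "card {z \<in> V. z \<le> x} = Suc (card {z \<in> V. z < x})"
proof -
  have "{z \<in> V. z \<le> x} = insert x {z \<in> V. z < x}" using assms by auto
  then show ?thesis using assms by simp
qed

context
  fixes u :: "nat list"
  assumes uF: "u \<in> Fib j v' E0"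
begin

definition VV :: "nat set" where "VV = set (drop j u)"

lemma uF_props:
  "packed u" "length u = j + length v'" "sorted (take j u)" "pack (drop j u) = v'"
  "lastocc0 u \<inter> {..<j} = E0"
  using uF by (auto simp: Fib_def)

lemma u_sorted: "i \<le> i' \<Longrightarrow> i' < j \<Longrightarrow> u!i \<le> u!i'"
  using uF_props(3) uF_props(2) by (simp add: sorted_iff_nth_mono)

lemma seqw_nth: "i < j \<Longrightarrow> seqw j u ! i = card {y \<in> VV. y < u!i}"
  using uF_props(2) by (simp add: seqw_def cr_def VV_def)

lemma length_seqw: "length (seqw j u) = j"
  using uF_props(2) by (simp add: seqw_def)

lemma finVV: "finite VV" by (simp add: VV_def)

lemma cardVV: "card VV = card (set v')"
  using card_set_pack[of "drop j u"] uF_props(4) by (simp add: VV_def)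

lemma V1: "j \<le> k \<Longrightarrow> k < length u \<Longrightarrow> u!k \<in> VV"
  unfolding VV_def in_set_drop_nth by auto

lemma V2: "i < j \<Longrightarrow> i \<in> lastocc0 u \<Longrightarrow> u!i \<notin> VV"
  unfolding VV_def in_set_drop_nth lastocc0_alt by force

lemma V3:
  assumes "i < j" "u!i \<notin> VV"
  shows "\<exists>e. i \<le> e \<and> e \<in> lastocc0 u \<and> u!e = u!i \<and> e < j"
proof -
  have "i < length u" using assms uF_props(2) by simp
  then obtain e where e: "i \<le> e" "e \<in> lastocc0 u" "u!e = u!i" using lastocc0_exists by blast
  have "e < j"
  proof (rule ccontr)
    assume "\<not> e < j"
    then have "u!e \<in> VV" using V1 e(2) by (simp add: lastocc0_def)
    then show False using e assms by simp
  qed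
  then show ?thesis using e by blast
qed

lemma F1: "i < j \<Longrightarrow> trun E0 (seqw j u) i \<longleftrightarrow> u!i \<notin> VV"
proof -
  assume i: "i < j"
  let ?s = "seqw j u"
  show "trun E0 ?s i \<longleftrightarrow> u!i \<notin> VV"
  proof
    assume t: "trun E0 ?s i"
    then obtain e where e: "e \<in> E0" "i \<le> e" "?s!e = ?s!i" unfolding trun_def by blast
    have ej: "e < j" "e \<in> lastocc0 u" using e E0j uF_props(5) by auto
    have ue: "u!e \<notin> VV" using V2 ej by simp
    show "u!i \<notin> VV"
    proof
      assume ui: "u!i \<in> VV"
      have "u!i \<le> u!e" using u_sorted e ej by simp
      then have "u!i < u!e" using ui ue by (cases "u!i = u!e") auto
      then have "card {y \<in> VV. y < u!i} < card {y \<in> VV. y < u!e}"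
        using cardlt_strict[OF finVV ui] by simp
      then show False using e seqw_nth i ej by simp
    qed
  next
    assume ui: "u!i \<notin> VV"
    obtain e where e: "i \<le> e" "e \<in> lastocc0 u" "u!e = u!i" "e < j" using V3[OF i ui] by blast
    have "e \<in> E0" using e uF_props(5) by auto
    moreover have "?s!e = ?s!i" using e i seqw_nth by simp
    ultimately show "trun E0 ?s i" unfolding trun_def using e by blast
  qed
qed

lemma F2:
  assumes "i < j" "trun E0 (seqw j u) i"
  shows "ekey E0 (seqw j u) i \<in> lastocc0 u \<and> ekey E0 (seqw j u) i < j \<and> u!(ekey E0 (seqw j u) i) = u!i"
proof -
  let ?s = "seqw j u"
  let ?e0 = "ekey E0 ?s i"
  have ui: "u!i \<notin> VV" using F1 assms by simp
  obtain e where e: "i \<le> e" "e \<in> lastocc0 u" "u!e = u!i" "e < j" using V3[OF assms(1) ui] by blast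
  have eE: "e \<in> E0" using e uF_props(5) by auto
  have se: "?s!e = ?s!i" using e assms seqw_nth by simp
  have le: "?e0 \<le> e" using ekey_le[OF eE e(1) se] .
  have p0: "?e0 \<in> E0" "i \<le> ?e0" using ekey_prop[OF assms(2)] by auto
  have e0j: "?e0 < j" "?e0 \<in> lastocc0 u" using p0 E0j uF_props(5) by auto
  have "u!i \<le> u!?e0" using u_sorted p0 e0j by simp
  moreover have "u!?e0 \<le> u!e" using u_sorted[OF le e(4)] .
  ultimately have "u!?e0 = u!i" using e by simp
  then show ?thesis using e0j by simp
qed

lemma seqw_Valid: "seqw j u \<in> Valid j NN"
proof -
  let ?s = "seqw j u"
  have srt: "sorted ?s"
    unfolding sorted_iff_nth_mono length_seqw
  proof (intro allI impI)
    fix a b assume "a \<le> b" "b < j"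
    then show "?s!a \<le> ?s!b" using seqw_nth u_sorted cardlt_mono[OF finVV] by simp
  qed
  have bnd: "\<forall>x\<in>set ?s. x < NN"
  proof
    fix x assume "x \<in> set ?s"
    then obtain i where i: "i < j" "x = ?s!i" by (auto simp: in_set_conv_nth length_seqw)
    have le: "x \<le> card (set v')"
      using i seqw_nth cardVV card_mono[OF finVV, of "{y \<in> VV. y < u!i}"] by auto
    show "x < NN"
    proof (cases "j - 1 \<in> E0")
      case True then show ?thesis using le by (simp add: NN_def)
    next
      case False
      have jl: "j - 1 < j" using j0 by simp
      have "j - 1 \<notin> lastocc0 u" using False uF_props(5) jl by auto
      then obtain k where k: "j - 1 < k" "k < length u" "u!k = u!(j-1)"
        unfolding lastocc0_alt using jl uF_props(2) by auto
      have "u!(j-1) \<in> VV" using V1[of k] k by simp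
      then have "card {y \<in> VV. y < u!(j-1)} < card VV"
        by (intro psubset_card_mono finVV) auto
      moreover have "x \<le> card {y \<in> VV. y < u!(j-1)}"
        using i seqw_nth[OF i(1)] cardlt_mono[OF finVV u_sorted[of i "j-1"]] jl by simp
      ultimately show ?thesis using cardVV False by (simp add: NN_def)
    qed
  qed
  show ?thesis unfolding Valid_def using srt bnd length_seqw by simp
qed


definition rkV :: "nat \<Rightarrow> nat" where "rkV x = card {z \<in> VV. z \<le> x}"

lemma K_v:
  assumes "j \<le> a" "a < length u"
  shows "keys j E0 v' (seqw j u) ! a = 2 * rkV (u!a) * Suc j"
proof -
  define c where "c = a - j"
  have a: "a = j + c" using assms c_def by simp
  have c: "c < length v'" using assms uF_props(2) a by simp
  have "v'!c = pack (drop j u) ! c" using uF_props(4) by simp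
  also have "\<dots> = rkV (u!a)"
    using c uF_props(2) a by (simp add: pack_def rkV_def VV_def)
  finally show ?thesis using keys_nth_v[OF c] a by simp
qed

lemma K_p: "a < j \<Longrightarrow> keys j E0 v' (seqw j u) ! a = pkey j E0 (seqw j u) a"
  by (rule keys_nth_p)

lemma rkV_S: "x \<in> VV \<Longrightarrow> rkV x = Suc (card {z \<in> VV. z < x})"
  unfolding rkV_def by (rule rk_in[OF finVV])

lemma cmp_lt:
  assumes a: "a < length u" and b: "b < length u" and lt: "u!a < u!b"
  shows "keys j E0 v' (seqw j u) ! a < keys j E0 v' (seqw j u) ! b"
proof -
  let ?s = "seqw j u"
  let ?K = "keys j E0 v' ?s"
  have Tk: "?K!i = (2*(?s!i)+1)*Suc j + ekey E0 ?s i" "ekey E0 ?s i < Suc j"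
    if "i < j" "u!i \<notin> VV" for i
    using that F1 K_p ekey_lt[OF E0j] by (auto simp: pkey_def)
  have Sk: "?K!i = 2*(?s!i+1)*Suc j" "?s!i + 1 = rkV (u!i)"
    if "i < j" "u!i \<in> VV" for i
    using that F1 K_p rkV_S seqw_nth by (auto simp: pkey_def)
  show ?thesis
  proof (cases "a < j")
    case aj: True
    show ?thesis
    proof (cases "b < j")
      case bj: True
      have sab: "?s!a \<le> ?s!b" using seqw_nth aj bj cardlt_mono[OF finVV] lt by simp
      show ?thesis
      proof (cases "u!a \<in> VV")
        case Sa: True
        have slt: "?s!a < ?s!b" using seqw_nth aj bj cardlt_strict[OF finVV Sa lt] by simp
        show ?thesis
        proof (cases "u!b \<in> VV")
          case True
          have h: "2*(?s!a+1)*Suc j < 2*(?s!b+1)*Suc j" by (subst ka) (use slt in simp_all)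
          show ?thesis unfolding Sk(1)[OF aj Sa] Sk(1)[OF bj True] by (rule h)
        next
          case False
          have h: "2*(?s!a+1)*Suc j < (2*(?s!b)+1)*Suc j + ekey E0 ?s b"
            by (rule iffD2[OF kb[OF Tk(2)[OF bj False]]]) (use slt in simp)
          show ?thesis unfolding Sk(1)[OF aj Sa] Tk(1)[OF bj False] by (rule h)
        qed
      next
        case Ta: False
        show ?thesis
        proof (cases "u!b \<in> VV")
          case True
          have h: "(2*(?s!a)+1)*Suc j + ekey E0 ?s a < 2*(?s!b+1)*Suc j"
            by (rule iffD2[OF kc[OF Tk(2)[OF aj Ta]]]) (use sab in simp)
          show ?thesis unfolding Tk(1)[OF aj Ta] Sk(1)[OF bj True] by (rule h)
        next
          case Tb: False
          have ta: "trun E0 ?s a" and tb: "trun E0 ?s b" using F1 aj bj Ta Tb by auto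
          have ekl: "ekey E0 ?s a < ekey E0 ?s b" if "?s!a = ?s!b"
          proof (rule ccontr)
            assume "\<not> ekey E0 ?s a < ekey E0 ?s b"
            then have "ekey E0 ?s b \<le> ekey E0 ?s a" by simp
            moreover have "ekey E0 ?s a < j" "u!(ekey E0 ?s a) = u!a" using F2[OF aj ta] by auto
            moreover have "u!(ekey E0 ?s b) = u!b" using F2[OF bj tb] by auto
            ultimately have "u!(ekey E0 ?s b) \<le> u!(ekey E0 ?s a)" using u_sorted by blast
            then have "u!b \<le> u!a" using F2[OF aj ta] F2[OF bj tb] by simp
            then show False using lt by simp
          qed
          have h: "(2*(?s!a)+1)*Suc j + ekey E0 ?s a < (2*(?s!b)+1)*Suc j + ekey E0 ?s b"
          proof (rule iffD2[OF kd[OF Tk(2)[OF aj Ta] Tk(2)[OF bj Tb]]])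
            show "?s!a < ?s!b \<or> (?s!a = ?s!b \<and> ekey E0 ?s a < ekey E0 ?s b)"
              using sab ekl by (cases "?s!a = ?s!b") auto
          qed
          show ?thesis unfolding Tk(1)[OF aj Ta] Tk(1)[OF bj Tb] by (rule h)
        qed
      qed
    next
      case bj: False
      have yV: "u!b \<in> VV" using V1 bj b by simp
      have Kb: "?K!b = 2 * rkV (u!b) * Suc j" using K_v bj b by simp
      show ?thesis
      proof (cases "u!a \<in> VV")
        case Sa: True
        have "rkV (u!a) < rkV (u!b)" unfolding rkV_def using card_le_strict[OF finVV Sa yV lt] .
        then have h: "2*(?s!a+1)*Suc j < 2*rkV (u!b)*Suc j" by (subst ka) (use Sk(2)[OF aj Sa] in simp_all)
        show ?thesis unfolding Sk(1)[OF aj Sa] Kb by (rule h)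
      next
        case Ta: False
        have "?s!a < rkV (u!b)" unfolding rkV_def using G1[OF finVV yV lt] seqw_nth aj by simp
        then have h: "(2*(?s!a)+1)*Suc j + ekey E0 ?s a < 2*rkV (u!b)*Suc j"
          by (rule iffD2[OF kc[OF Tk(2)[OF aj Ta]]])
        show ?thesis unfolding Tk(1)[OF aj Ta] Kb by (rule h)
      qed
    qed
  next
    case aj: False
    have yV: "u!a \<in> VV" using V1 aj a by simp
    have Ka: "?K!a = 2 * rkV (u!a) * Suc j" using K_v aj a by simp
    show ?thesis
    proof (cases "b < j")
      case bj: True
      have r: "rkV (u!a) \<le> ?s!b" unfolding rkV_def using G2[OF finVV lt] seqw_nth bj by simp
      show ?thesis
      proof (cases "u!b \<in> VV")
        case True
        have h: "2*rkV (u!a)*Suc j < 2*(?s!b+1)*Suc j" by (subst ka) (use r in simp_all)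
        show ?thesis unfolding Sk(1)[OF bj True] Ka by (rule h)
      next
        case False
        have h: "2*rkV (u!a)*Suc j < (2*(?s!b)+1)*Suc j + ekey E0 ?s b"
          by (rule iffD2[OF kb[OF Tk(2)[OF bj False]]]) (rule r)
        show ?thesis unfolding Tk(1)[OF bj False] Ka by (rule h)
      qed
    next
      case bj: False
      have yb: "u!b \<in> VV" using V1 bj b by simp
      have "rkV (u!a) < rkV (u!b)" unfolding rkV_def using card_le_strict[OF finVV yV yb lt] .
      then have h: "2*rkV (u!a)*Suc j < 2*rkV (u!b)*Suc j" by (subst ka) simp_all
      have Kb: "?K!b = 2 * rkV (u!b) * Suc j" using K_v bj b by simp
      show ?thesis unfolding Ka Kb by (rule h)
    qed
  qed
qed

lemma cmp_eq:
  assumes a: "a < length u" and b: "b < length u" and eq: "u!a = u!b"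
  shows "keys j E0 v' (seqw j u) ! a = keys j E0 v' (seqw j u) ! b"
proof -
  let ?s = "seqw j u"
  let ?K = "keys j E0 v' ?s"
  have Sk: "?K!i = 2*rkV (u!i)*Suc j" if "u!i \<in> VV" "i < length u" for i
  proof (cases "i < j")
    case True
    then show ?thesis using that F1 K_p rkV_S seqw_nth by (auto simp: pkey_def)
  next
    case False
    then show ?thesis using that K_v by simp
  qed
  show ?thesis
  proof (cases "u!a \<in> VV")
    case True
    then show ?thesis using Sk[OF True a] Sk[of b] b eq by simp
  next
    case False
    then have aj: "a < j" using V1 a by (cases "a < j") auto
    have bj: "b < j" using V1 b False eq by (cases "b < j") auto
    have ta: "trun E0 ?s a" and tb: "trun E0 ?s b" using F1 aj bj False eq by auto
    have sab: "?s!a = ?s!b" using seqw_nth aj bj eq by simp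
    have "ekey E0 ?s a = ekey E0 ?s b"
      by (rule lastocc0_unique) (use F2[OF aj ta] F2[OF bj tb] eq in auto)
    then show ?thesis using K_p aj bj ta tb sab by (simp add: pkey_def)
  qed
qed

lemma Phi_seqw: "pack (keys j E0 v' (seqw j u)) = u"
proof -
  have sp: "samep (keys j E0 v' (seqw j u)) u"
  proof (rule samep_from)
    show "length (keys j E0 v' (seqw j u)) = length u" using uF_props(2) length_seqw by simp
  next
    fix a b assume "a < length u" "b < length u" "u!a < u!b"
    then show "keys j E0 v' (seqw j u) ! a < keys j E0 v' (seqw j u) ! b" by (rule cmp_lt)
  next
    fix a b assume "a < length u" "b < length u" "u!a = u!b"
    then show "keys j E0 v' (seqw j u) ! a = keys j E0 v' (seqw j u) ! b" by (rule cmp_eq)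
  qed
  show ?thesis using pack_samep_eq[OF sp] pack_packed[OF uF_props(1)] by simp
qed

end


lemma fiber_ctx: "(\<Sum>u\<in>Fib j v' E0. q ^ sum_list (seqw j u)) = Aq q j NN"
proof -
  have bij: "bij_betw (seqw j) (Fib j v' E0) (Valid j NN)"
  proof (rule bij_betw_byWitness[where f' = "\<lambda>s. pack (keys j E0 v' s)"])
    show "\<forall>a\<in>Fib j v' E0. pack (keys j E0 v' (seqw j a)) = a" using Phi_seqw by blast
    show "\<forall>a'\<in>Valid j NN. seqw j (pack (keys j E0 v' a')) = a'" using seqw_Phi by blast
    show "seqw j ` Fib j v' E0 \<subseteq> Valid j NN" using seqw_Valid by blast
    show "(\<lambda>s. pack (keys j E0 v' s)) ` Valid j NN \<subseteq> Fib j v' E0" using Phi_Fib by blast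
  qed
  show ?thesis unfolding Aq_def using sum.reindex_bij_betw[OF bij, of "\<lambda>s. q ^ sum_list s"] by simp
qed

end


lemma fiber:
  assumes "packed v'" "E0 \<subseteq> {..<j}" "0 < j"
  shows "(\<Sum>u\<in>Fib j v' E0. q ^ sum_list (seqw j u)) =
         Aq q j (card (set v') + (if j - 1 \<in> E0 then 1 else 0))"
  by (simp only: fiber_ctx[OF assms] NN_def[OF assms])


lemma alphaS_pack:
  "alphaS j (pack (take k u)) = (if length (take k u) = j \<and> sorted (take k u) then 1 else 0)"
  using packed_pack samep_sorted[OF samep_pack] by (simp add: alphaS_def)

lemma Sprod_Cons:
  assumes "packed u" "j \<le> length u"
  shows "Sprod q (j # J') u = (if sorted (take j u) then q ^ sum_list (seqw j u) * Sprod q J' (pack (drop j u)) else 0)"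
proof -
  define f where "f = (\<lambda>k. alphaS j (pack (take k u)) * Sprod q J' (pack (drop k u)) *
          q powi (int (sinv u) - int (sinv (pack (take k u))) - int (sinv (pack (drop k u)))))"
  have "Sprod q (j # J') u = (\<Sum>k\<le>length u. f k)"
    using assms(1) by (simp add: qprod_def f_def)
  also have "\<dots> = (\<Sum>k\<in>{j}. f k)"
  proof (rule sum.mono_neutral_right)
    show "\<forall>i\<in>{..length u} - {j}. f i = 0"
      by (auto simp: f_def alphaS_pack)
  qed (use assms in auto)
  also have "\<dots> = f j" by simp
  also have "\<dots> = (if sorted (take j u) then q ^ sum_list (seqw j u) * Sprod q J' (pack (drop j u)) else 0)"
  proof (cases "sorted (take j u)")
    case True
    have s1: "sinv (pack (take j u)) = 0"
      using samep_sinv[OF samep_pack[of "take j u"]] sinv_sorted[OF True] by simp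
    have s2: "sinv (pack (drop j u)) = sinv (drop j u)"
      using samep_sinv[OF samep_pack[of "drop j u"]] by simp
    have s3: "sinv u = sinv (drop j u) + sum_list (seqw j u)"
      using sinv_sorted_append[OF True, of "drop j u"] by (simp add: seqw_def)
    have "int (sinv u) - int (sinv (pack (take j u))) - int (sinv (pack (drop j u))) = int (sum_list (seqw j u))"
      using s1 s2 s3 by simp
    then show ?thesis using True assms by (simp add: f_def alphaS_pack power_int_of_nat)
  next
    case False
    then show ?thesis by (simp add: f_def alphaS_pack)
  qed
  finally show ?thesis .
qed

lemma finite_packed_len: "finite {u. packed u \<and> length u = L}"
proof (rule finite_subset)
  show "{u. packed u \<and> length u = L} \<subseteq> {u. set u \<subseteq> {..L} \<and> length u = L}"
  proof
    fix u assume u: "u \<in> {u. packed u \<and> length u = L}"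
    then have eq: "set u = {1..card (set u)}" using packed_set by auto
    have c: "card (set u) \<le> L" using u card_length by auto
    have "\<And>x. x \<in> set u \<Longrightarrow> x \<le> L"
    proof -
      fix x assume "x \<in> set u"
      then have "x \<in> {1..card (set u)}" using eq by simp
      then show "x \<le> L" using c by simp
    qed
    then show "u \<in> {u. set u \<subseteq> {..L} \<and> length u = L}" using u by auto
  qed
  show "finite {u. set u \<subseteq> {..L} \<and> length u = L}" by (rule finite_lists_length_eq) simp
qed

lemma lastocc0_drop: "lastocc0 (drop j u) = {i. i + j \<in> lastocc0 u}"
proof (rule set_eqI)
  fix i
  show "i \<in> lastocc0 (drop j u) \<longleftrightarrow> i \<in> {i. i + j \<in> lastocc0 u}"
  proof
    assume h: "i \<in> lastocc0 (drop j u)"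
    then have il: "i + j < length u" by (auto simp: lastocc0_def)
    have hh: "\<forall>k'. i < k' \<and> k' < length (drop j u) \<longrightarrow> drop j u ! k' \<noteq> drop j u ! i"
      using h unfolding lastocc0_alt by blast
    have "\<forall>k. i + j < k \<and> k < length u \<longrightarrow> u!k \<noteq> u!(i+j)"
    proof (intro allI impI)
      fix k assume k: "i + j < k \<and> k < length u"
      have a: "i < k - j" "k - j < length (drop j u)" using k by auto
      have "drop j u ! (k - j) \<noteq> drop j u ! i" using hh a by blast
      moreover have "j + (k - j) = k" using k by simp
      ultimately show "u!k \<noteq> u!(i+j)" using k by (simp add: add.commute)
    qed
    then show "i \<in> {i. i + j \<in> lastocc0 u}" using il unfolding lastocc0_alt by auto
  next
    assume h: "i \<in> {i. i + j \<in> lastocc0 u}"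
    then have il: "i + j < length u" by (auto simp: lastocc0_def)
    have "\<forall>k. i < k \<and> k < length (drop j u) \<longrightarrow> drop j u ! k \<noteq> drop j u ! i"
    proof (intro allI impI)
      fix k assume k: "i < k \<and> k < length (drop j u)"
      have "u!(k + j) \<noteq> u!(i+j)" using h k unfolding lastocc0_alt by auto
      then show "drop j u ! k \<noteq> drop j u ! i" using k il by (simp add: add.commute)
    qed
    then show "i \<in> lastocc0 (drop j u)" using il unfolding lastocc0_alt by auto
  qed
qed

lemma lastocc0_pack: "lastocc0 (pack u) = lastocc0 u"
  using samep_lastocc0[OF samep_pack] by simp

lemma last_occ_pack: "last_occ (pack u) = last_occ u"
  by (simp add: last_occ_lastocc0 lastocc0_pack)

definition Wset :: "nat \<Rightarrow> nat set \<Rightarrow> nat list set" where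
  "Wset L R = {v'. packed v' \<and> length v' = L \<and> last_occ v' = R}"

lemma CIJ_sum:
  assumes "\<forall>x\<in>set I. 0 < x"
  shows "CIJ q I J = (\<Sum>u\<in>Wset (sum_list I) (set (ps I)). Sprod q J u)"
proof -
  have "{u. packed u \<and> length u = sum_list I \<and> WC u = I} = Wset (sum_list I) (set (ps I))"
    using WC_iff[OF assms] by (auto simp: Wset_def)
  then show ?thesis by (simp add: CIJ_def SJ_def zeta_def)
qed

lemma finite_Wset: "finite (Wset L R)"
  by (rule finite_subset[OF _ finite_packed_len[of L]]) (auto simp: Wset_def)

lemma occ_split:
  assumes "0 \<notin> P" "Suc ` {i. i + j \<in> L0} = (\<lambda>x. x - j) ` {x\<in>P. j < x}"
  shows "Suc ` L0 = P \<longleftrightarrow> L0 \<inter> {..<j} = {i. i < j \<and> Suc i \<in> P}"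
proof
  assume "Suc ` L0 = P"
  then show "L0 \<inter> {..<j} = {i. i < j \<and> Suc i \<in> P}" by auto
next
  assume h: "L0 \<inter> {..<j} = {i. i < j \<and> Suc i \<in> P}"
  have key: "\<And>k. k + j \<in> L0 \<longleftrightarrow> Suc k + j \<in> P"
  proof -
    fix k
    have "k + j \<in> L0 \<longleftrightarrow> Suc k \<in> Suc ` {i. i + j \<in> L0}" by auto
    also have "\<dots> \<longleftrightarrow> Suc k \<in> (\<lambda>x. x - j) ` {x\<in>P. j < x}" using assms(2) by simp
    also have "\<dots> \<longleftrightarrow> Suc k + j \<in> P"
    proof
      assume "Suc k \<in> (\<lambda>x. x - j) ` {x\<in>P. j < x}"
      then obtain x where x: "Suc k = x - j" "x \<in> P" "j < x" by auto
      then have "x = Suc k + j" by simp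
      then show "Suc k + j \<in> P" using x by simp
    next
      assume "Suc k + j \<in> P"
      moreover have "Suc k = (Suc k + j) - j" by simp
      ultimately show "Suc k \<in> (\<lambda>x. x - j) ` {x\<in>P. j < x}" by (intro rev_image_eqI[of "Suc k + j"]) auto
    qed
    finally show "k + j \<in> L0 \<longleftrightarrow> Suc k + j \<in> P" .
  qed
  show "Suc ` L0 = P"
  proof (rule set_eqI)
    fix x show "x \<in> Suc ` L0 \<longleftrightarrow> x \<in> P"
    proof (cases x)
      case 0 then show ?thesis using assms(1) by auto
    next
      case (Suc i)
      have "i \<in> L0 \<longleftrightarrow> Suc i \<in> P"
      proof (cases "i < j")
        case True then show ?thesis using h by blast
      next
        case False
        then obtain k where "i = k + j" by (metis add.commute le_Suc_ex not_less)
        then show ?thesis using key[of k] by simp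
      qed
      then show ?thesis using Suc by auto
    qed
  qed
qed

lemma main_decomp:
  assumes pos: "\<forall>x\<in>set I. 0 < x" and n: "sum_list I = n" and j: "0 < j" "j \<le> n"
  defines "R \<equiv> (\<lambda>x. x - j) ` {x \<in> set (ps I). j < x}"
  shows "CIJ q I (j # J') = (\<Sum>v'\<in>Wset (n - j) R.
            Sprod q J' v' * Aq q j (card (set v') + (if j \<in> set (ps I) then 1 else 0)))"
proof -
  define U where "U = Wset n (set (ps I))"
  define E0 where "E0 = {i. i < j \<and> Suc i \<in> set (ps I)}"
  define wt where "wt = (\<lambda>u. q ^ sum_list (seqw j u) * Sprod q J' (pack (drop j u)))"
  have E0j: "E0 \<subseteq> {..<j}" by (auto simp: E0_def)
  have jE0: "(j - 1 \<in> E0) = (j \<in> set (ps I))" using j by (auto simp: E0_def)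
  have "CIJ q I (j # J') = (\<Sum>u\<in>U. Sprod q (j # J') u)"
    using n by (simp add: U_def CIJ_sum[OF pos] del: Sprod.simps)
  also have "\<dots> = (\<Sum>u\<in>U. if sorted (take j u) then wt u else 0)"
    by (rule sum.cong) (use j in \<open>auto simp: U_def Wset_def Sprod_Cons wt_def simp del: Sprod.simps\<close>)
  also have "\<dots> = (\<Sum>u\<in>{u\<in>U. sorted (take j u)}. wt u)"
    by (rule sum.inter_filter[symmetric]) (simp add: U_def finite_Wset)
  also have "\<dots> = (\<Sum>v'\<in>Wset (n - j) R. \<Sum>u\<in>{u\<in>{u\<in>U. sorted (take j u)}. pack (drop j u) = v'}. wt u)"
  proof (rule sum.group[symmetric])
    show "finite {u\<in>U. sorted (take j u)}" by (simp add: U_def finite_Wset)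
    show "finite (Wset (n - j) R)" by (rule finite_Wset)
    show "(\<lambda>u. pack (drop j u)) ` {u\<in>U. sorted (take j u)} \<subseteq> Wset (n - j) R"
    proof
      fix v assume "v \<in> (\<lambda>u. pack (drop j u)) ` {u\<in>U. sorted (take j u)}"
      then obtain u where u: "u \<in> U" "v = pack (drop j u)" by auto
      have lo: "last_occ u = set (ps I)" "length u = n" using u by (auto simp: U_def Wset_def)
      have "last_occ v = Suc ` {i. i + j \<in> lastocc0 u}"
        using u by (simp add: last_occ_lastocc0 lastocc0_pack lastocc0_drop)
      also have "\<dots> = R"
      proof -
        have "set (ps I) = Suc ` lastocc0 u" using lo last_occ_lastocc0 by simp
        have "Suc ` {i. i + j \<in> lastocc0 u} = (\<lambda>x. x - j) ` {x \<in> Suc ` lastocc0 u. j < x}"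
        proof (rule set_eqI)
          fix y
          show "y \<in> Suc ` {i. i + j \<in> lastocc0 u} \<longleftrightarrow> y \<in> (\<lambda>x. x - j) ` {x \<in> Suc ` lastocc0 u. j < x}"
          proof
            assume "y \<in> Suc ` {i. i + j \<in> lastocc0 u}"
            then obtain i where i: "y = Suc i" "i + j \<in> lastocc0 u" by auto
            have "Suc (i + j) \<in> {x \<in> Suc ` lastocc0 u. j < x}" using i by auto
            moreover have "y = Suc (i + j) - j" using i by simp
            ultimately show "y \<in> (\<lambda>x. x - j) ` {x \<in> Suc ` lastocc0 u. j < x}" by (rule rev_image_eqI)
          next
            assume "y \<in> (\<lambda>x. x - j) ` {x \<in> Suc ` lastocc0 u. j < x}"
            then obtain l where l: "y = Suc l - j" "l \<in> lastocc0 u" "j < Suc l" by auto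
            have "(l - j) + j = l" using l by simp
            then have "l - j \<in> {i. i + j \<in> lastocc0 u}" using l by simp
            moreover have "y = Suc (l - j)" using l by simp
            ultimately show "y \<in> Suc ` {i. i + j \<in> lastocc0 u}" by (rule rev_image_eqI)
          qed
        qed
        then show ?thesis unfolding R_def using \<open>set (ps I) = Suc ` lastocc0 u\<close> by simp
      qed
      finally show "v \<in> Wset (n - j) R" using u lo packed_pack by (auto simp: Wset_def)
    qed
  qed
  also have "\<dots> = (\<Sum>v'\<in>Wset (n - j) R.
            Sprod q J' v' * Aq q j (card (set v') + (if j \<in> set (ps I) then 1 else 0)))"
  proof (rule sum.cong[OF refl])
    fix v' assume v': "v' \<in> Wset (n - j) R"
    have vw: "packed v'" "length v' = n - j" "last_occ v' = R" using v' by (auto simp: Wset_def)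
    have P0: "0 \<notin> set (ps I)" using ps_pos[OF pos] by auto
    have eqv: "last_occ u = set (ps I) \<longleftrightarrow> lastocc0 u \<inter> {..<j} = E0"
      if "pack (drop j u) = v'" for u
    proof -
      have "lastocc0 v' = {i. i + j \<in> lastocc0 u}"
        using lastocc0_pack[of "drop j u"] lastocc0_drop[of j u] that by simp
      then have "Suc ` {i. i + j \<in> lastocc0 u} = last_occ v'"
        by (simp add: last_occ_lastocc0)
      then have "Suc ` {i. i + j \<in> lastocc0 u} = (\<lambda>x. x - j) ` {x\<in>set (ps I). j < x}"
        using vw R_def by simp
      from occ_split[OF P0 this] show ?thesis by (simp add: last_occ_lastocc0 E0_def)
    qed
    have F: "{u\<in>{u\<in>U. sorted (take j u)}. pack (drop j u) = v'} = Fib j v' E0"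
    proof (rule set_eqI)
      fix u
      show "u \<in> {u\<in>{u\<in>U. sorted (take j u)}. pack (drop j u) = v'} \<longleftrightarrow> u \<in> Fib j v' E0"
      proof (cases "pack (drop j u) = v'")
        case True
        have "length u = n \<longleftrightarrow> length u = j + length v'" using vw j by auto
        then show ?thesis using True eqv[OF True] by (auto simp: U_def Wset_def Fib_def)
      next
        case False then show ?thesis by (auto simp: Fib_def)
      qed
    qed
    have "(\<Sum>u\<in>Fib j v' E0. wt u) = (\<Sum>u\<in>Fib j v' E0. Sprod q J' v' * q ^ sum_list (seqw j u))"
      by (rule sum.cong) (auto simp: wt_def Fib_def)
    also have "\<dots> = Sprod q J' v' * Aq q j (card (set v') + (if j \<in> set (ps I) then 1 else 0))"
      using fiber[of v' E0 j q] v' E0j j jE0 by (simp add: sum_distrib_left[symmetric] Wset_def)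
    finally show "(\<Sum>u\<in>{u\<in>{u\<in>U. sorted (take j u)}. pack (drop j u) = v'}. wt u) =
        Sprod q J' v' * Aq q j (card (set v') + (if j \<in> set (ps I) then 1 else 0))"
      using F by simp
  qed
  finally show ?thesis .
qed


lemma ps_cons2: "set (ps (a # b # I)) = insert a (set (ps ((a + b) # I)))"
  by (auto simp: add.assoc)

lemma card_ps: "\<forall>x\<in>set I. 0 < x \<Longrightarrow> card (set (ps I)) = length I"
  using ps_strict[of I] by (simp add: distinct_card strict_sorted_iff)

theorem mainTheorem5:
  fixes q :: "'a::field" and n :: nat and I J :: "nat list"
  assumes "q \<noteq> 0" and "0 < n"
    and "I \<in> compositions n" and "J \<in> compositions n"
  shows "(I ! 0 < J ! 0 \<longrightarrow>
            CIJ q I J = CIJ q ((I ! 0 + I ! 1) # drop 2 I) J)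
       \<and> (\<not> I ! 0 < J ! 0 \<longrightarrow>
            CIJ q I J = qbinom q (length I + J ! 0 - 1) (J ! 0)
                        * CIJ q (remove_cells (J ! 0) I) (tl J))"
proof -
  have posI: "\<forall>x\<in>set I. 0 < x" and sI: "sum_list I = n"
    using assms(3) by (auto simp: compositions_def)
  have posJ: "\<forall>x\<in>set J. 0 < x" and sJ: "sum_list J = n"
    using assms(4) by (auto simp: compositions_def)
  obtain j J' where J: "J = j # J'" using sJ assms(2) by (cases J) auto
  have j0: "0 < j" using posJ J by auto
  have jn: "j \<le> n" using sJ J by auto
  obtain i1 I2 where I: "I = i1 # I2" using sI assms(2) by (cases I) auto
  have i10: "0 < i1" using posI I by auto
  show ?thesis
  proof (intro conjI impI)
    assume lt: "I ! 0 < J ! 0"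
    then have lt': "i1 < j" using I J by simp
    obtain i2 I3 where I2: "I2 = i2 # I3"
      using sI I lt' jn by (cases I2) auto
    define Im where "Im = (i1 + i2) # I3"
    have posIm: "\<forall>x\<in>set Im. 0 < x" using posI I I2 Im_def by auto
    have sIm: "sum_list Im = n" using sI I I2 Im_def by simp
    have setI: "set (ps I) = insert i1 (set (ps Im))" using I I2 Im_def ps_cons2 by simp
    have R: "{x \<in> set (ps I). j < x} = {x \<in> set (ps Im). j < x}" using setI lt' by auto
    have jj: "(j \<in> set (ps I)) = (j \<in> set (ps Im))" using setI lt' by auto
    have "CIJ q I J = CIJ q Im J"
      unfolding J main_decomp[OF posI sI j0 jn] main_decomp[OF posIm sIm j0 jn] R jj ..
    then show "CIJ q I J = CIJ q ((I ! 0 + I ! 1) # drop 2 I) J"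
      using I I2 Im_def by simp
  next
    assume nlt: "\<not> I ! 0 < J ! 0"
    then have ge: "j \<le> i1" using I J by simp
    define R where "R = (\<lambda>x. x - j) ` {x \<in> set (ps I). j < x}"
    define I' where "I' = remove_cells j I"
    have psI: "set (ps I) = insert i1 ((+) i1 ` set (ps I2))" using I by simp
    have pos2: "\<forall>y\<in>set (ps I2). 0 < y" using ps_pos[of I2] posI I by simp
    have low: "{x \<in> set (ps I). \<not> j < x} = (if j \<in> set (ps I) then {j} else {})"
      using psI pos2 ge by auto
    have injR: "inj_on (\<lambda>x. x - j) {x \<in> set (ps I). j < x}" by (auto simp: inj_on_def)
    have cardR: "card R + (if j \<in> set (ps I) then 1 else 0) = length I"
    proof -
      have "set (ps I) = {x \<in> set (ps I). j < x} \<union> {x \<in> set (ps I). \<not> j < x}" by auto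
      then have "card (set (ps I)) = card {x \<in> set (ps I). j < x} + card {x \<in> set (ps I). \<not> j < x}"
        by (metis (no_types, lifting) card_Un_disjoint disjoint_iff finite_Un finite_set mem_Collect_eq)
      then show ?thesis using card_ps[OF posI] low card_image[OF injR] R_def by auto
    qed
    have cardv: "card (set v') + (if j \<in> set (ps I) then 1 else 0) = length I"
      if "v' \<in> Wset (n - j) R" for v'
    proof -
      have "card (set v') = card (lastocc0 v')" by (simp add: card_lastocc0)
      also have "\<dots> = card (last_occ v')" by (simp add: last_occ_lastocc0 card_image)
      also have "\<dots> = card R" using that by (simp add: Wset_def)
      finally show ?thesis using cardR by simp
    qed
    have Ieq: "set (ps I') = R \<and> sum_list I' = n - j \<and> (\<forall>x\<in>set I'. 0 < x)"
    proof (cases "j < i1")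
      case True
      obtain m where m: "j = Suc m" using j0 by (cases j) auto
      have I'd: "I' = (i1 - j) # I2" unfolding I'_def I m using True m by simp
      have "R = insert (i1 - j) ((\<lambda>y. i1 + y - j) ` set (ps I2))"
        unfolding R_def psI using True pos2 by (auto simp: image_image)
      also have "\<dots> = set (ps I')" unfolding I'd using True by (auto simp: image_iff)
      finally show ?thesis using I'd sI I True posI by auto
    next
      case False
      then have ji: "j = i1" using ge by simp
      obtain m where m: "j = Suc m" using j0 by (cases j) auto
      have I'd: "I' = I2" unfolding I'_def I ji[symmetric] m by simp
      have "R = (\<lambda>y. i1 + y - j) ` set (ps I2)"
      proof
        show "R \<subseteq> (\<lambda>y. i1 + y - j) ` set (ps I2)"
          unfolding R_def psI using ji pos2 by (auto simp: image_image)
        show "(\<lambda>y. i1 + y - j) ` set (ps I2) \<subseteq> R"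
        proof
          fix z assume "z \<in> (\<lambda>y. i1 + y - j) ` set (ps I2)"
          then obtain y where y: "y \<in> set (ps I2)" "z = i1 + y - j" by auto
          have "i1 + y \<in> {x \<in> set (ps I). j < x}" using y pos2 ji psI by auto
          then show "z \<in> R" unfolding R_def using y by (intro rev_image_eqI[of "i1 + y"]) auto
        qed
      qed
      also have "\<dots> = set (ps I')" unfolding I'd using ji by (auto simp: image_iff)
      finally show ?thesis using I'd sI I ji posI by auto
    qed
    have "CIJ q I J = (\<Sum>v'\<in>Wset (n - j) R. Sprod q J' v' * Aq q j (length I))"
      unfolding J main_decomp[OF posI sI j0 jn] R_def[symmetric]
      by (rule sum.cong) (auto simp: cardv)
    also have "\<dots> = Aq q j (length I) * CIJ q I' J'"
      using Ieq CIJ_sum[of I' q J'] by (simp add: sum_distrib_left mult.commute)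
    also have "Aq q j (length I) = qbinom q (length I + j - 1) j"
      using Aq_formula[of q j "length I - 1"] I by simp
    finally show "CIJ q I J = qbinom q (length I + J ! 0 - 1) (J ! 0) * CIJ q (remove_cells (J ! 0) I) (tl J)"
      using J I'_def by simp
  qed
qed

end
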